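(* Let $\mathcal{X}$ be a finite-dimensional complex vector space and $L=\bigoplus_{k\in\mathbb{Z}_n}L_k$ a $\mathbb{Z}_n$-graded Lie algebra of operators on $\mathcal{X}$. If $L_0$ consists of scalar operators (multiples of the identity), then $L$ is solvable, and hence triangularizable.
   Context: A Lie algebra of operators is a linear subspace closed under $[a,b]=ab-ba$. $L$ is $\mathbb{Z}_n$-graded if $L$ is the direct sum of subspaces $L_k$, $k\in\mathbb{Z}_n$, with $[L_j,L_k]\subseteq L_{j+k}$ (indices mod $n$). Triangularizable means there is a maximal chain of subspaces invariant under all operators of $L$ (equivalently, a basis in which all are upper triangular). *)

theory Defs
  imports "HOL-Analysis.Analysis"
begin

text \<open>Operators on a d-dimensional complex space X are represented (after fixing a basis)
  as square complex matrices indexed by a finite type 'd; the order on 'd fixes the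
  ordering of the basis used for upper triangularity.\<close>

type_synonym 'd cmat = "((complex, 'd) vec, 'd) vec"

definition cscale :: "complex \<Rightarrow> 'd::finite cmat \<Rightarrow> 'd cmat" where
  "cscale c A = (\<chi> i j. c * A$i$j)"

definition lie_bracket :: "'d::finite cmat \<Rightarrow> 'd cmat \<Rightarrow> 'd cmat" where
  "lie_bracket A B = A ** B - B ** A"

definition csubspace :: "'d::finite cmat set \<Rightarrow> bool" where
  "csubspace S \<longleftrightarrow> 0 \<in> S \<and> (\<forall>A\<in>S. \<forall>B\<in>S. A + B \<in> S) \<and> (\<forall>c. \<forall>A\<in>S. cscale c A \<in> S)"

definition cspan :: "'d::finite cmat set \<Rightarrow> 'd cmat set" where
  "cspan X = \<Inter>{S. csubspace S \<and> X \<subseteq> S}"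

definition lie_algebra :: "'d::finite cmat set \<Rightarrow> bool" where
  "lie_algebra L \<longleftrightarrow> csubspace L \<and> (\<forall>A\<in>L. \<forall>B\<in>L. lie_bracket A B \<in> L)"

definition derived :: "'d::finite cmat set \<Rightarrow> 'd cmat set" where
  "derived L = cspan {lie_bracket A B | A B. A \<in> L \<and> B \<in> L}"

definition solvable :: "'d::finite cmat set \<Rightarrow> bool" where
  "solvable L \<longleftrightarrow> (\<exists>k. (derived ^^ k) L = {0})"

definition upper_triangular :: "'d::{finite,linorder} cmat \<Rightarrow> bool" where
  "upper_triangular M \<longleftrightarrow> (\<forall>i j. j < i \<longrightarrow> M$i$j = 0)"

definition triangularizable :: "'d::{finite,linorder} cmat set \<Rightarrow> bool" where
  "triangularizable L \<longleftrightarrow> (\<exists>P::'d cmat. invertible P \<and> (\<forall>A\<in>L. upper_triangular (matrix_inv P ** A ** P)))"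

definition Zn_graded :: "nat \<Rightarrow> (nat \<Rightarrow> 'd::finite cmat set) \<Rightarrow> 'd cmat set \<Rightarrow> bool" where
  "Zn_graded n Lk L \<longleftrightarrow>
     (\<forall>k<n. csubspace (Lk k)) \<and>
     L = {(\<Sum>k<n. x k) | x. \<forall>k<n. x k \<in> Lk k} \<and>
     (\<forall>x. (\<forall>k<n. x k \<in> Lk k) \<and> (\<Sum>k<n. x k) = 0 \<longrightarrow> (\<forall>k<n. x k = 0)) \<and>
     (\<forall>j<n. \<forall>k<n. \<forall>A\<in>Lk j. \<forall>B\<in>Lk k. lie_bracket A B \<in> Lk ((j + k) mod n))"

end

theory Submission
  imports Defs "HOL-Computational_Algebra.Fundamental_Theorem_Algebra"
begin


lemma mm_sub_l: "(A::'a::comm_ring_1^'n::finite^'m) ** (B - C) = A ** B - A ** C"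
  by (simp add: vec_eq_iff matrix_matrix_mult_def sum_subtractf algebra_simps)
lemma mm_sub_r: "((B::'a::comm_ring_1^'n::finite^'m) - C) ** (A::'a^'k^'n) = B ** A - C ** A"
  by (simp add: vec_eq_iff matrix_matrix_mult_def sum_subtractf algebra_simps)
lemma mm_add_r: "((B::'a::comm_ring_1^'n::finite^'m) + C) ** (A::'a^'k^'n) = B ** A + C ** A"
  by (simp add: vec_eq_iff matrix_matrix_mult_def sum.distrib algebra_simps)

lemma cscale_mm_l: "cscale c A ** B = cscale c (A ** B)"
  by (simp add: cscale_def vec_eq_iff matrix_matrix_mult_def sum_distrib_left algebra_simps)
lemma cscale_mm_r: "A ** cscale c B = cscale c (A ** B)"
  by (simp add: cscale_def vec_eq_iff matrix_matrix_mult_def sum_distrib_left algebra_simps)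
lemma cscale_add: "cscale c (A + B) = cscale c A + cscale c B"
  by (simp add: cscale_def vec_eq_iff algebra_simps)
lemma cscale_sub: "cscale c (A - B) = cscale c A - cscale c B"
  by (simp add: cscale_def vec_eq_iff algebra_simps)
lemma cscale_0[simp]: "cscale c 0 = 0" by (simp add: cscale_def vec_eq_iff)
lemma cscale_zero[simp]: "cscale 0 A = 0" by (simp add: cscale_def vec_eq_iff)
lemma cscale_one[simp]: "cscale 1 A = A" by (simp add: cscale_def vec_eq_iff)
lemma cscale_cscale: "cscale a (cscale b A) = cscale (a*b) A" by (simp add: cscale_def vec_eq_iff)
lemma cscale_neg: "cscale (-1) A = - A" by (simp add: cscale_def vec_eq_iff)

lemma lb_add_l: "lie_bracket (A + B) C = lie_bracket A C + lie_bracket B C"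
  unfolding lie_bracket_def by (simp add: matrix_add_ldistrib mm_add_r)
lemma lb_add_r: "lie_bracket C (A + B) = lie_bracket C A + lie_bracket C B"
  unfolding lie_bracket_def by (simp add: matrix_add_ldistrib mm_add_r)
lemma lb_scale_l: "lie_bracket (cscale c A) B = cscale c (lie_bracket A B)"
  unfolding lie_bracket_def by (simp add: cscale_mm_l cscale_mm_r cscale_sub)
lemma lb_scale_r: "lie_bracket A (cscale c B) = cscale c (lie_bracket A B)"
  unfolding lie_bracket_def by (simp add: cscale_mm_l cscale_mm_r cscale_sub)
lemma lb_0_l[simp]: "lie_bracket 0 A = 0" unfolding lie_bracket_def by simp
lemma lb_0_r[simp]: "lie_bracket A 0 = 0" unfolding lie_bracket_def by simp
lemma lb_anti: "lie_bracket A B = - lie_bracket B A" unfolding lie_bracket_def by simp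
lemma mat_mm_l: "mat c ** (B::'a::comm_ring_1^'n::finite^'n) = (\<chi> i j. c * B$i$j)"
proof -
  have "\<And>i j. (\<Sum>k\<in>UNIV. (if i = k then c else 0) * B$k$j) = c * B$i$j"
    by (simp add: if_distrib[of "\<lambda>x. x * _"] sum.delta cong: if_cong)
  then show ?thesis by (simp add: vec_eq_iff matrix_matrix_mult_def mat_def)
qed
lemma mat_mm_r: "(B::'a::comm_ring_1^'n::finite^'n) ** mat c = (\<chi> i j. c * B$i$j)"
proof -
  have "\<And>i j. (\<Sum>k\<in>UNIV. B$i$k * (if k = j then c else 0)) = c * B$i$j"
    by (simp add: if_distrib[of "\<lambda>x. _ * x"] sum.delta' mult.commute cong: if_cong)
  then show ?thesis by (simp add: vec_eq_iff matrix_matrix_mult_def mat_def)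
qed
lemma lb_mat_l[simp]: "lie_bracket (mat c) B = 0"
  unfolding lie_bracket_def by (simp add: mat_mm_l mat_mm_r)
lemma lb_mat_r[simp]: "lie_bracket B (mat c) = 0"
  unfolding lie_bracket_def by (simp add: mat_mm_l mat_mm_r)
lemma jacobi: "lie_bracket (lie_bracket A B) C = lie_bracket A (lie_bracket B C) - lie_bracket B (lie_bracket A C)"
  unfolding lie_bracket_def by (simp add: mm_sub_l mm_sub_r matrix_mul_assoc)


lemma csubspace_0: "csubspace S \<Longrightarrow> 0 \<in> S" by (simp add: csubspace_def)
lemma csubspace_add: "csubspace S \<Longrightarrow> a \<in> S \<Longrightarrow> b \<in> S \<Longrightarrow> a + b \<in> S" by (simp add: csubspace_def)
lemma csubspace_scale: "csubspace S \<Longrightarrow> a \<in> S \<Longrightarrow> cscale c a \<in> S" by (simp add: csubspace_def)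
lemma csubspace_neg: "csubspace S \<Longrightarrow> a \<in> S \<Longrightarrow> - a \<in> S"
  using csubspace_scale[of S a "-1"] by (simp add: cscale_neg)
lemma csubspace_diff: "csubspace S \<Longrightarrow> a \<in> S \<Longrightarrow> b \<in> S \<Longrightarrow> a - b \<in> S"
  using csubspace_add[of S a "-b"] csubspace_neg[of S b] by simp
lemma csubspace_sum:
  assumes "csubspace S" "finite I" "\<And>i. i \<in> I \<Longrightarrow> f i \<in> S" shows "sum f I \<in> S"
  using assms(2,3) by (induction I rule: finite_induct) (auto simp: csubspace_0[OF assms(1)] csubspace_add[OF assms(1)])

lemma csubspace_cspan: "csubspace (cspan X)"
  unfolding cspan_def csubspace_def by auto
lemma cspan_superset: "X \<subseteq> cspan X"
  unfolding cspan_def by auto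
lemma cspan_least: "csubspace S \<Longrightarrow> X \<subseteq> S \<Longrightarrow> cspan X \<subseteq> S"
  unfolding cspan_def by auto
lemma cspan_mono: "X \<subseteq> Y \<Longrightarrow> cspan X \<subseteq> cspan Y"
  by (meson cspan_least csubspace_cspan cspan_superset order_trans)
lemma csubspace_UNIV: "csubspace UNIV" by (simp add: csubspace_def)
lemma csubspace_Int: "csubspace A \<Longrightarrow> csubspace B \<Longrightarrow> csubspace (A \<inter> B)"
  by (simp add: csubspace_def)

lemma bilin_ext:
  assumes T: "csubspace T" and gen: "\<And>x y. x \<in> X \<Longrightarrow> y \<in> Y \<Longrightarrow> lie_bracket x y \<in> T"
    and x: "x \<in> cspan X" and y: "y \<in> cspan Y"
  shows "lie_bracket x y \<in> T"
proof -
  have s1: "csubspace {x. \<forall>y\<in>Y. lie_bracket x y \<in> T}"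
    using T by (auto simp: csubspace_def lb_add_l lb_scale_l)
  have "X \<subseteq> {x. \<forall>y\<in>Y. lie_bracket x y \<in> T}" using gen by auto
  then have c1: "cspan X \<subseteq> {x. \<forall>y\<in>Y. lie_bracket x y \<in> T}" using cspan_least s1 by blast
  have s2: "csubspace {y. \<forall>x\<in>cspan X. lie_bracket x y \<in> T}"
    using T by (auto simp: csubspace_def lb_add_r lb_scale_r)
  have "Y \<subseteq> {y. \<forall>x\<in>cspan X. lie_bracket x y \<in> T}" using c1 by auto
  then have "cspan Y \<subseteq> {y. \<forall>x\<in>cspan X. lie_bracket x y \<in> T}" using cspan_least s2 by blast
  then show ?thesis using x y by auto
qed

lemma lie_algebra_derived_sub: assumes "lie_algebra S" shows "derived S \<subseteq> S"
proof -
  have "csubspace S" "\<forall>A\<in>S. \<forall>B\<in>S. lie_bracket A B \<in> S" using assms unfolding lie_algebra_def by auto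
  then show ?thesis unfolding derived_def by (intro cspan_least) blast+
qed

lemma lie_algebra_derived: "lie_algebra S \<Longrightarrow> lie_algebra (derived S)"
proof -
  assume a: "lie_algebra S"
  have "\<And>A B. A \<in> derived S \<Longrightarrow> B \<in> derived S \<Longrightarrow> lie_bracket A B \<in> derived S"
  proof -
    fix A B assume "A \<in> derived S" "B \<in> derived S"
    then have "A \<in> S" "B \<in> S" using lie_algebra_derived_sub[OF a] by auto
    then have "lie_bracket A B \<in> {lie_bracket A B | A B. A \<in> S \<and> B \<in> S}" by blast
    then show "lie_bracket A B \<in> derived S" unfolding derived_def
      using cspan_superset by (rule subsetD[rotated])
  qed
  moreover have "csubspace (derived S)" unfolding derived_def by (rule csubspace_cspan)
  ultimately show ?thesis unfolding lie_algebra_def by blast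
qed

lemma derived_mono: "A \<subseteq> B \<Longrightarrow> derived A \<subseteq> derived B"
  unfolding derived_def by (rule cspan_mono) blast

lemma derived_funpow_mono: "A \<subseteq> B \<Longrightarrow> (derived ^^ k) A \<subseteq> (derived ^^ k) B"
  by (induction k) (simp_all add: derived_mono)

lemma zero_in_derived: "0 \<in> derived S"
  unfolding derived_def using csubspace_cspan csubspace_0 by blast


lemma cscale_sum: "cscale c (sum f I) = sum (\<lambda>i. cscale c (f i)) I"
  by (induction I rule: infinite_finite_induct) (auto simp: cscale_add)

inductive_set wd :: "'d::finite cmat set \<Rightarrow> 'd cmat set" for Y where
  wd_base: "y \<in> Y \<Longrightarrow> y \<in> wd Y"
| wd_step: "w \<in> wd Y \<Longrightarrow> y \<in> Y \<Longrightarrow> lie_bracket w y \<in> wd Y"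

definition Sub :: "'d::finite cmat set \<Rightarrow> 'd cmat set" where "Sub Y = cspan (wd Y)"

lemma csubspace_Sub: "csubspace (Sub Y)" unfolding Sub_def by (rule csubspace_cspan)

lemma Sub_superset: "Y \<subseteq> Sub Y"
proof
  fix y assume "y \<in> Y" then have "y \<in> wd Y" by (rule wd_base)
  then show "y \<in> Sub Y" unfolding Sub_def using cspan_superset by (rule subsetD[rotated])
qed

lemma wd_Sub: "wd Y \<subseteq> Sub Y" unfolding Sub_def by (rule cspan_superset)

lemma Sub_step1: assumes "x \<in> Sub Y" "y \<in> Y" shows "lie_bracket x y \<in> Sub Y"
proof (rule bilin_ext[of "Sub Y" "wd Y" Y])
  show "csubspace (Sub Y)" by (rule csubspace_Sub)
  show "lie_bracket w z \<in> Sub Y" if "w \<in> wd Y" "z \<in> Y" for w z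
    using wd_step[OF that] wd_Sub by blast
  show "x \<in> cspan (wd Y)" using assms(1) unfolding Sub_def .
  show "y \<in> cspan Y" using assms(2) cspan_superset by (rule subsetD[rotated])
qed

lemma Sub_step2: assumes "w \<in> wd Y" shows "\<forall>x\<in>Sub Y. lie_bracket x w \<in> Sub Y"
  using assms
proof (induction w rule: wd.induct)
  case (wd_base y) then show ?case using Sub_step1 by blast
next
  case (wd_step w y)
  show ?case
  proof
    fix x assume x: "x \<in> Sub Y"
    have e: "lie_bracket x (lie_bracket w y) = lie_bracket (lie_bracket x w) y + - lie_bracket (lie_bracket x y) w"
      using jacobi[of x w y] lb_anti[of w "lie_bracket x y"] by (simp add: algebra_simps)
    have 1: "lie_bracket (lie_bracket x w) y \<in> Sub Y" using wd_step x Sub_step1 by blast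
    have "lie_bracket x y \<in> Sub Y" using Sub_step1 x wd_step by blast
    then have 2: "- lie_bracket (lie_bracket x y) w \<in> Sub Y"
      using wd_step csubspace_neg[OF csubspace_Sub] by blast
    show "lie_bracket x (lie_bracket w y) \<in> Sub Y"
      unfolding e using csubspace_add[OF csubspace_Sub 1 2] .
  qed
qed

lemma Sub_closed: assumes "x \<in> Sub Y" "y \<in> Sub Y" shows "lie_bracket x y \<in> Sub Y"
proof (rule bilin_ext[of "Sub Y" "wd Y" "wd Y"])
  show "csubspace (Sub Y)" by (rule csubspace_Sub)
  show "lie_bracket w z \<in> Sub Y" if "w \<in> wd Y" "z \<in> wd Y" for w z
    using Sub_step2[OF that(2)] that(1) wd_Sub by blast
qed (use assms in \<open>auto simp: Sub_def\<close>)

lemma wd_least: assumes "\<forall>x\<in>T. \<forall>y\<in>T. lie_bracket x y \<in> T" "Y \<subseteq> T" shows "wd Y \<subseteq> T"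
proof
  fix w assume "w \<in> wd Y" then show "w \<in> T"
    by (induction w rule: wd.induct) (use assms in blast)+
qed

lemma Sub_least: assumes "csubspace T" "\<forall>x\<in>T. \<forall>y\<in>T. lie_bracket x y \<in> T" "Y \<subseteq> T"
  shows "Sub Y \<subseteq> T"
  unfolding Sub_def using wd_least[OF assms(2,3)] assms(1) by (rule cspan_least[rotated])

lemma Sub_mono: "X \<subseteq> Y \<Longrightarrow> Sub X \<subseteq> Sub Y"
  by (meson Sub_closed Sub_least Sub_superset csubspace_Sub order_trans)

definition Scal :: "'d::finite cmat set" where "Scal = range mat"

lemma mat_add: "mat a + mat b = (mat (a + b) :: 'a::semiring_1^'n^'n)"
  by (simp add: vec_eq_iff mat_def)
lemma cscale_mat: "cscale c (mat a) = mat (c * a)"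
  by (simp add: vec_eq_iff mat_def cscale_def)

lemma csubspace_Scal: "csubspace Scal"
  unfolding csubspace_def Scal_def
  by (auto simp: mat_add cscale_mat) (metis mat_0 rangeI)

lemma Scal_closed: "\<forall>x\<in>Scal. \<forall>y\<in>Scal. lie_bracket x y \<in> Scal"
  unfolding Scal_def by (auto simp: image_iff) (metis mat_0)

lemma derived_Scal: "X \<subseteq> Scal \<Longrightarrow> derived X = {0}"
proof -
  assume X: "X \<subseteq> Scal"
  have "{lie_bracket A B | A B. A \<in> X \<and> B \<in> X} \<subseteq> {0}" using X unfolding Scal_def by auto
  moreover have "csubspace ({0} :: 'a cmat set)" by (simp add: csubspace_def)
  ultimately have "derived X \<subseteq> {0}" unfolding derived_def by (rule cspan_least[rotated])
  then show ?thesis using zero_in_derived by blast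
qed


locale grad =
  fixes n :: nat and Lk :: "nat \<Rightarrow> 'd::finite cmat set"
  assumes n1: "n \<ge> 1"
    and sub: "\<And>k. k < n \<Longrightarrow> csubspace (Lk k)"
    and uniq: "\<And>x k. (\<forall>k<n. x k \<in> Lk k) \<Longrightarrow> (\<Sum>k<n. x k) = 0 \<Longrightarrow> k < n \<Longrightarrow> x k = 0"
    and brk: "\<And>j k A B. j < n \<Longrightarrow> k < n \<Longrightarrow> A \<in> Lk j \<Longrightarrow> B \<in> Lk k \<Longrightarrow> lie_bracket A B \<in> Lk ((j + k) mod n)"
    and scal: "\<And>A. A \<in> Lk 0 \<Longrightarrow> \<exists>c. A = mat c"
begin

lemma lb0_l: "A \<in> Lk 0 \<Longrightarrow> lie_bracket A B = 0" using scal by force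
lemma lb0_r: "B \<in> Lk 0 \<Longrightarrow> lie_bracket A B = 0" using scal by force

lemma zero_two: assumes "x \<in> Lk a" "x \<in> Lk b" "a < n" "b < n" "a \<noteq> b" shows "x = 0"
proof -
  define z where "z t = (if t = a then x else 0) + (if t = b then - x else 0)" for t
  have zin: "\<forall>t<n. z t \<in> Lk t"
    using assms sub csubspace_0 csubspace_neg by (auto simp: z_def)
  have "(\<Sum>t<n. z t) = x + - x"
    unfolding z_def sum.distrib using assms by (simp add: if_distrib cong: if_cong)
  then have "(\<Sum>t<n. z t) = 0" by simp
  from uniq[OF zin this assms(3)] show ?thesis using assms by (simp add: z_def)
qed

lemma proj: assumes "\<forall>t<n. z t \<in> Lk t" "(\<Sum>t<n. z t) = x" "x \<in> Lk a" "a < n"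
  shows "z a = x"
proof -
  define z' where "z' t = z t - (if t = a then x else 0)" for t
  have zin: "\<forall>t<n. z' t \<in> Lk t"
  proof (intro allI impI)
    fix t assume t: "t < n"
    show "z' t \<in> Lk t"
    proof (cases "t = a")
      case True then show ?thesis using csubspace_diff[OF sub[OF t]] assms t by (simp add: z'_def)
    next
      case False then show ?thesis using assms t by (simp add: z'_def)
    qed
  qed
  have "(\<Sum>t<n. z' t) = x - x"
    unfolding z'_def sum_subtractf using assms by simp
  then have "(\<Sum>t<n. z' t) = 0" by simp
  from uniq[OF zin this assms(4)] show ?thesis by (simp add: z'_def)
qed

definition hom where "hom = (\<Union>t\<in>{..<n}. Lk t)"

lemma cspan_Lk: "t < n \<Longrightarrow> cspan (S \<inter> Lk t) \<subseteq> Lk t"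
  by (rule cspan_least) (auto simp: sub)

lemma decomp_span: assumes "S \<subseteq> hom" "x \<in> cspan S"
  shows "\<exists>z. (\<forall>t<n. z t \<in> cspan (S \<inter> Lk t)) \<and> x = (\<Sum>t<n. z t)"
proof -
  define P where "P = {x. \<exists>z. (\<forall>t<n. z t \<in> cspan (S \<inter> Lk t)) \<and> x = (\<Sum>t<n. z t)}"
  have "csubspace P"
    unfolding csubspace_def
  proof (intro conjI ballI allI)
    show "0 \<in> P" unfolding P_def
      by (rule CollectI, rule exI[of _ "\<lambda>t. 0"]) (simp add: csubspace_0[OF csubspace_cspan])
  next
    fix A B assume "A \<in> P" "B \<in> P"
    then obtain z z' where "\<forall>t<n. z t \<in> cspan (S \<inter> Lk t)" "A = (\<Sum>t<n. z t)"
       "\<forall>t<n. z' t \<in> cspan (S \<inter> Lk t)" "B = (\<Sum>t<n. z' t)" unfolding P_def by blast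
    then show "A + B \<in> P" unfolding P_def
      by (intro CollectI exI[of _ "\<lambda>t. z t + z' t"]) (simp add: sum.distrib csubspace_add[OF csubspace_cspan])
  next
    fix c A assume "A \<in> P"
    then obtain z where "\<forall>t<n. z t \<in> cspan (S \<inter> Lk t)" "A = (\<Sum>t<n. z t)" unfolding P_def by blast
    then show "cscale c A \<in> P" unfolding P_def
      by (intro CollectI exI[of _ "\<lambda>t. cscale c (z t)"]) (simp add: cscale_sum csubspace_scale[OF csubspace_cspan])
  qed
  moreover have "S \<subseteq> P"
  proof
    fix s assume s: "s \<in> S"
    then obtain a where a: "a < n" "s \<in> Lk a" using assms(1) unfolding hom_def by auto
    have "s \<in> cspan (S \<inter> Lk a)" using s a cspan_superset by blast
    then show "s \<in> P" unfolding P_def using a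
      by (intro CollectI exI[of _ "\<lambda>t. if t = a then s else 0"])
         (auto simp: csubspace_0[OF csubspace_cspan])
  qed
  ultimately have "cspan S \<subseteq> P" by (rule cspan_least)
  then show ?thesis using assms(2) unfolding P_def by blast
qed

lemma span_comp: assumes "S \<subseteq> hom" "x \<in> cspan S" "x \<in> Lk a" "a < n"
  shows "x \<in> cspan (S \<inter> Lk a)"
proof -
  obtain z where z: "\<forall>t<n. z t \<in> cspan (S \<inter> Lk t)" "x = (\<Sum>t<n. z t)"
    using decomp_span[OF assms(1,2)] by blast
  have "\<forall>t<n. z t \<in> Lk t" using z(1) cspan_Lk by blast
  then have "z a = x" using proj[of z x a] z assms by simp
  then show ?thesis using z(1) assms(4) by metis
qed

lemma lb_hom: assumes "x \<in> hom" "y \<in> hom" shows "lie_bracket x y \<in> hom"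
proof -
  obtain j k where "j < n" "k < n" "x \<in> Lk j" "y \<in> Lk k" using assms unfolding hom_def by auto
  then have "lie_bracket x y \<in> Lk ((j + k) mod n)" by (rule brk)
  moreover have "(j + k) mod n < n" using n1 by simp
  ultimately show ?thesis unfolding hom_def by blast
qed

lemma wd_hom: "Y \<subseteq> hom \<Longrightarrow> wd Y \<subseteq> hom"
proof
  fix w assume Y: "Y \<subseteq> hom" and w: "w \<in> wd Y" from w show "w \<in> hom"
  proof (induction w rule: wd.induct)
    case (wd_base y) then show ?case using Y by blast
  next
    case (wd_step w y) then show ?case using Y lb_hom by blast
  qed
qed

definition gsa where "gsa M \<longleftrightarrow> csubspace M \<and> (\<forall>x\<in>M. \<forall>y\<in>M. lie_bracket x y \<in> M) \<and>
   (\<forall>x\<in>M. \<exists>z. (\<forall>t<n. z t \<in> M \<inter> Lk t) \<and> x = (\<Sum>t<n. z t))"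

lemma gsa_lie: "gsa M \<Longrightarrow> lie_algebra M" unfolding gsa_def lie_algebra_def by auto

definition Hb where "Hb M = {lie_bracket a b | a b i j. i < n \<and> j < n \<and> a \<in> M \<inter> Lk i \<and> b \<in> M \<inter> Lk j}"

lemma Hb_hom: "Hb M \<subseteq> hom"
  unfolding Hb_def using lb_hom unfolding hom_def by blast

lemma derived_Hb: assumes "gsa M" shows "derived M = cspan (Hb M)"
proof
  have "Hb M \<subseteq> {lie_bracket A B | A B. A \<in> M \<and> B \<in> M}" unfolding Hb_def by blast
  then have "Hb M \<subseteq> derived M" unfolding derived_def using cspan_superset by (rule order_trans)
  then show "cspan (Hb M) \<subseteq> derived M" unfolding derived_def
    by (rule cspan_least[OF csubspace_cspan])
next
  define X where "X = (\<Union>t\<in>{..<n}. M \<inter> Lk t)"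
  have MX: "M \<subseteq> cspan X"
  proof
    fix x assume "x \<in> M"
    then obtain z where z: "\<forall>t<n. z t \<in> M \<inter> Lk t" "x = (\<Sum>t<n. z t)" using assms unfolding gsa_def by blast
    have "\<forall>t<n. z t \<in> cspan X"
    proof (intro allI impI)
      fix t assume "t < n" then have "z t \<in> X" using z(1) unfolding X_def by blast
      then show "z t \<in> cspan X" using cspan_superset by (rule subsetD[rotated])
    qed
    then show "x \<in> cspan X" unfolding z(2) by (intro csubspace_sum[OF csubspace_cspan]) auto
  qed
  have "{lie_bracket A B | A B. A \<in> M \<and> B \<in> M} \<subseteq> cspan (Hb M)"
  proof clarify
    fix A B assume AB: "A \<in> M" "B \<in> M"
    show "lie_bracket A B \<in> cspan (Hb M)"
    proof (rule bilin_ext[of _ X X])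
      show "csubspace (cspan (Hb M))" by (rule csubspace_cspan)
      show "lie_bracket x y \<in> cspan (Hb M)" if "x \<in> X" "y \<in> X" for x y
      proof -
        have "lie_bracket x y \<in> Hb M" using that unfolding X_def Hb_def by blast
        then show ?thesis using cspan_superset by (rule subsetD[rotated])
      qed
    qed (use AB MX in auto)
  qed
  then show "derived M \<subseteq> cspan (Hb M)" unfolding derived_def
    by (rule cspan_least[OF csubspace_cspan])
qed

lemma gsa_derived: assumes "gsa M" shows "gsa (derived M)"
proof -
  have lie: "lie_algebra M" using assms by (rule gsa_lie)
  have dl: "lie_algebra (derived M)" using lie by (rule lie_algebra_derived)
  have "\<forall>x\<in>derived M. \<exists>z. (\<forall>t<n. z t \<in> derived M \<inter> Lk t) \<and> x = (\<Sum>t<n. z t)"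
  proof
    fix x assume "x \<in> derived M"
    then have "x \<in> cspan (Hb M)" using derived_Hb[OF assms] by simp
    then obtain z where z: "\<forall>t<n. z t \<in> cspan (Hb M \<inter> Lk t)" "x = (\<Sum>t<n. z t)"
      using decomp_span[OF Hb_hom] by blast
    have "\<forall>t<n. z t \<in> derived M \<inter> Lk t"
    proof (intro allI impI)
      fix t assume t: "t < n"
      have "cspan (Hb M \<inter> Lk t) \<subseteq> derived M"
        using derived_Hb[OF assms] cspan_mono[of "Hb M \<inter> Lk t" "Hb M"] by auto
      then show "z t \<in> derived M \<inter> Lk t" using z(1) t cspan_Lk by blast
    qed
    then show "\<exists>z. (\<forall>t<n. z t \<in> derived M \<inter> Lk t) \<and> x = (\<Sum>t<n. z t)" using z(2) by blast
  qed
  then show ?thesis using dl unfolding gsa_def lie_algebra_def by blast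
qed

lemma gsa_funpow: "gsa M \<Longrightarrow> gsa ((derived ^^ j) M)"
  by (induction j) (auto simp: gsa_derived)

lemma funpow_sub: "gsa M \<Longrightarrow> (derived ^^ j) M \<subseteq> M"
proof (induction j)
  case (Suc j)
  have "derived ((derived ^^ j) M) \<subseteq> (derived ^^ j) M"
    using lie_algebra_derived_sub gsa_lie gsa_funpow Suc.prems by blast
  then show ?case using Suc by auto
qed simp

end


context grad begin

definition Yk where "Yk k M = (\<Union>t\<in>{t. t < n \<and> (t = 0 \<or> k < t)}. M \<inter> Lk t)"
definition Phi where "Phi k M = Sub (Yk k M)"

lemma Yk_hom: "Yk k M \<subseteq> hom" unfolding Yk_def hom_def by blast

lemma Phi_sub: assumes "gsa M" shows "Phi k M \<subseteq> M"
  unfolding Phi_def using assms unfolding gsa_def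
  by (intro Sub_least) (auto simp: Yk_def)

lemma Yk_Phi: "t < n \<Longrightarrow> t = 0 \<or> k < t \<Longrightarrow> M \<inter> Lk t \<subseteq> Phi k M"
  unfolding Phi_def using Sub_superset[of "Yk k M"] unfolding Yk_def by blast

lemma low_gen: assumes "gsa M" "1 \<le> a" "a \<le> k" "k < n" "u \<in> Phi k M" "u \<in> Lk a"
  shows "u \<in> cspan {lie_bracket w y | w y s t. s < n \<and> k < t \<and> t < n \<and> (s + t) mod n = a \<and>
              w \<in> Phi k M \<inter> Lk s \<and> y \<in> M \<inter> Lk t}" (is "_ \<in> cspan ?G")
proof -
  have an: "a < n" using assms by simp
  have "u \<in> cspan (wd (Yk k M))" using assms(5) unfolding Phi_def Sub_def .
  then have u1: "u \<in> cspan (wd (Yk k M) \<inter> Lk a)"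
    using span_comp[OF wd_hom[OF Yk_hom] _ assms(6) an] by blast
  moreover have "wd (Yk k M) \<inter> Lk a \<subseteq> cspan ?G"
  proof
    fix w' assume w': "w' \<in> wd (Yk k M) \<inter> Lk a"
    then have w1: "w' \<in> wd (Yk k M)" and w2: "w' \<in> Lk a" by auto
    from w1 show "w' \<in> cspan ?G"
    proof (cases rule: wd.cases)
      case wd_base
      then obtain t where t: "t < n" "t = 0 \<or> k < t" "w' \<in> Lk t" unfolding Yk_def by blast
      then have "t \<noteq> a" using assms by auto
      then have "w' = 0" using zero_two[OF w2 t(3) an t(1)] by simp
      then show ?thesis using csubspace_0[OF csubspace_cspan] by simp
    next
      case (wd_step w y)
      then obtain t where t: "t < n" "t = 0 \<or> k < t" "y \<in> M \<inter> Lk t" unfolding Yk_def by blast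
      have "w \<in> hom" using wd_step(2) wd_hom[OF Yk_hom] by blast
      then obtain s where s: "s < n" "w \<in> Lk s" unfolding hom_def by blast
      have wP: "w \<in> Phi k M" using wd_step(2) wd_Sub unfolding Phi_def by blast
      show ?thesis
      proof (cases "t = 0")
        case True
        then have "w' = 0" using wd_step(1) lb0_r t(3) by simp
        then show ?thesis using csubspace_0[OF csubspace_cspan] by simp
      next
        case False
        then have kt: "k < t" using t(2) by simp
        have inl: "w' \<in> Lk ((s + t) mod n)" using brk[OF s(1) t(1) s(2)] t(3) wd_step(1) by blast
        show ?thesis
        proof (cases "(s + t) mod n = a")
          case True
          then have "w' \<in> ?G" using wd_step(1) s t kt wP by blast
          then show ?thesis using cspan_superset by (rule subsetD[rotated])
        next
          case False
          have "(s + t) mod n < n" using n1 by simp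
          then have "w' = 0" using zero_two[OF inl w2 _ an False] by simp
          then show ?thesis using csubspace_0[OF csubspace_cspan] by simp
        qed
      qed
    qed
  qed
  then have "cspan (wd (Yk k M) \<inter> Lk a) \<subseteq> cspan ?G" by (rule cspan_least[OF csubspace_cspan])
  then show ?thesis using u1 by (rule subsetD)
qed

lemma crux:
  assumes M: "gsa M" and kn: "Suc k < n"
  shows "a < n \<Longrightarrow> u \<in> Phi k M \<Longrightarrow> u \<in> Lk a \<Longrightarrow> b < n \<Longrightarrow> v \<in> Phi k M \<Longrightarrow> v \<in> Lk b \<Longrightarrow>
    (a + b) mod n = Suc k \<Longrightarrow> lie_bracket u v \<in> Phi (Suc k) M"
proof (induction "n - a" arbitrary: a u b v rule: less_induct)
  case less
  note an = less.prems(1) and u = less.prems(2,3) and bn = less.prems(4) and v = less.prems(5,6)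
    and ab = less.prems(7)
  let ?G = "Phi (Suc k) M"
  have Gs: "csubspace ?G" unfolding Phi_def by (rule csubspace_Sub)
  have Gc: "\<And>x y. x \<in> ?G \<Longrightarrow> y \<in> ?G \<Longrightarrow> lie_bracket x y \<in> ?G" unfolding Phi_def by (rule Sub_closed)
  have PM: "Phi k M \<subseteq> M" by (rule Phi_sub[OF M])
  have hi: "\<And>x d. x \<in> M \<Longrightarrow> x \<in> Lk d \<Longrightarrow> d < n \<Longrightarrow> Suc k < d \<Longrightarrow> x \<in> ?G"
    using Yk_Phi by blast
  show ?case
  proof (cases "a = 0")
    case True then show ?thesis using lb0_l u Gs csubspace_0 by simp
  next
    case a0: False
    show ?thesis
    proof (cases "b = 0")
      case True then show ?thesis using lb0_r v Gs csubspace_0 by simp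
    next
      case b0: False
      show ?thesis
      proof (cases "a \<le> k \<and> b \<le> k")
        case False
        then consider "Suc k \<le> a" | "Suc k \<le> b" by linarith
        then show ?thesis
        proof cases
          case 1
          show ?thesis
          proof (cases "Suc k < a \<and> Suc k < b")
            case True
            then have "u \<in> ?G" "v \<in> ?G" using hi[of u a] hi[of v b] u v an bn PM by auto
            then show ?thesis using Gc by blast
          next
            case False
            have "(a + b) mod n \<noteq> Suc k"
            proof (cases "a + b < n")
              case True then show ?thesis using 1 b0 by simp
            next
              case nlt: False
              have "(a + b) mod n = a + b - n" using an bn nlt
                by (simp add: le_mod_geq mod_if)
              then show ?thesis using False 1 an bn b0 by auto
            qed
            then show ?thesis using ab by simp
          qed
        next
          case 2
          show ?thesis
          proof (cases "Suc k < a \<and> Suc k < b")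
            case True
            then have "u \<in> ?G" "v \<in> ?G" using hi[of u a] hi[of v b] u v an bn PM by auto
            then show ?thesis using Gc by blast
          next
            case False
            have "(a + b) mod n \<noteq> Suc k"
            proof (cases "a + b < n")
              case True then show ?thesis using 2 a0 by simp
            next
              case nlt: False
              have "(a + b) mod n = a + b - n" using an bn nlt
                by (simp add: le_mod_geq mod_if)
              then show ?thesis using False 2 an bn a0 by auto
            qed
            then show ?thesis using ab by simp
          qed
        qed
      next
        case True
        then have ak: "a \<le> k" and bk: "b \<le> k" by auto
        have abk: "a + b = Suc k"
        proof (cases "a + b < n")
          case True then show ?thesis using ab by simp
        next
          case False
          then have "(a + b) mod n = a + b - n" using an bn by (simp add: le_mod_geq)
          moreover have "a + b - n < Suc k" using ak bk kn False by linarith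
          ultimately show ?thesis using ab by simp
        qed
        let ?Gen = "{lie_bracket w y | w y s t. s < n \<and> k < t \<and> t < n \<and> (s + t) mod n = a \<and>
              w \<in> Phi k M \<inter> Lk s \<and> y \<in> M \<inter> Lk t}"
        have ug: "u \<in> cspan ?Gen" using low_gen[OF M _ ak _ u] a0 kn by simp
        have "?Gen \<subseteq> {x. lie_bracket x v \<in> ?G}"
        proof (rule subsetI)
          fix x assume "x \<in> ?Gen"
          then obtain w y s t where st: "s < n" "k < t" "t < n" "(s + t) mod n = a" "w \<in> Phi k M" "w \<in> Lk s"
            "y \<in> M" "y \<in> Lk t" and xd: "x = lie_bracket w y" by blast
          have sdef: "s = a + n - t"
          proof -
            have stn: "s + t \<ge> n"
            proof (rule ccontr)
              assume "\<not> n \<le> s + t" then have "(s + t) mod n = s + t" by simp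
              then show False using st ak by simp
            qed
            moreover have "s + t - n < n" using st by linarith
            ultimately have "(s + t) mod n = s + t - n" by (simp add: le_mod_geq)
            then show ?thesis using st stn by linarith
          qed
          have yP: "y \<in> Phi k M" using Yk_Phi[of t k M] st by blast
          have e: "lie_bracket (lie_bracket w y) v = lie_bracket w (lie_bracket y v) - lie_bracket y (lie_bracket w v)"
            by (rule jacobi)
          have T1: "lie_bracket y (lie_bracket w v) \<in> ?G"
          proof (cases "t = Suc k")
            case True
            have "s + b = n" using sdef abk True st by linarith
            then have "(s + b) mod n = 0" by simp
            then have "lie_bracket w v \<in> Lk 0" using brk[OF st(1) bn st(6) v(2)] by simp
            then show ?thesis using lb0_r Gs csubspace_0 by simp
          next
            case False
            then have tk: "Suc k < t" using st by simp
            have "s + b = n + Suc k - t" using sdef abk tk st by linarith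
            moreover have "n + Suc k - t < n" using tk st(3) by linarith
            ultimately have "(s + b) mod n = n + Suc k - t" by simp
            then have wv: "lie_bracket w v \<in> Lk (n + Suc k - t)" using brk[OF st(1) bn st(6) v(2)] by simp
            have "w \<in> M" "v \<in> M" using st(5) v(1) PM by (blast, blast)
            then have "lie_bracket w v \<in> M" using M unfolding gsa_def by simp
            then have "lie_bracket w v \<in> ?G" using hi[OF _ wv] tk st by simp
            moreover have "y \<in> ?G" using hi st tk by blast
            ultimately show ?thesis using Gc by blast
          qed
          have T2: "lie_bracket w (lie_bracket y v) \<in> ?G"
          proof -
            have yv1: "lie_bracket y v \<in> Phi k M" using yP v(1) Sub_closed unfolding Phi_def by blast
            have yv2: "lie_bracket y v \<in> Lk ((t + b) mod n)" using brk[OF st(3) bn st(8) v(2)] .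
            have "(s + (t + b) mod n) mod n = Suc k"
            proof -
              have e1: "(s + (t + b) mod n) mod n = (s + (t + b)) mod n" by (simp add: mod_add_right_eq)
              have e2: "s + (t + b) = Suc k + n" using sdef st abk by linarith
              have "(Suc k + n) mod n = Suc k" using kn by (simp only: mod_add_self2 mod_less)
              then show ?thesis unfolding e1 e2 .
            qed
            moreover have "n - s < n - a" using sdef st ak by linarith
            moreover have "(t + b) mod n < n" using n1 by simp
            ultimately show ?thesis using less.hyps[OF _ st(1) st(5) st(6) _ yv1 yv2] by blast
          qed
          show "x \<in> {x. lie_bracket x v \<in> ?G}" using csubspace_diff[OF Gs T2 T1] by (simp add: xd e)
        qed
        moreover have "csubspace {x. lie_bracket x v \<in> ?G}"
          using Gs unfolding csubspace_def by (auto simp: lb_add_l lb_scale_l)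
        ultimately have "cspan ?Gen \<subseteq> {x. lie_bracket x v \<in> ?G}" by (rule cspan_least[rotated])
        then show ?thesis using ug by blast
      qed
    qed
  qed
qed

end


context grad begin

lemma gsa_closed: "gsa M \<Longrightarrow> x \<in> M \<Longrightarrow> y \<in> M \<Longrightarrow> lie_bracket x y \<in> M"
  unfolding gsa_def by blast

lemma claim: "k < n \<Longrightarrow> gsa M \<Longrightarrow> (derived ^^ (2^k - 1)) M \<subseteq> Phi k M"
proof (induction k arbitrary: M)
  case 0
  show ?case
  proof
    fix x assume "x \<in> (derived ^^ (2^0 - 1)) M"
    then have x: "x \<in> M" by simp
    then obtain z where z: "\<forall>t<n. z t \<in> M \<inter> Lk t" "x = (\<Sum>t<n. z t)" using 0 unfolding gsa_def by blast
    have "\<forall>t<n. z t \<in> Phi 0 M"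
    proof (intro allI impI)
      fix t assume t: "t < n"
      have "M \<inter> Lk t \<subseteq> Phi 0 M" by (rule Yk_Phi) (use t in auto)
      then show "z t \<in> Phi 0 M" using z(1) t by blast
    qed
    then show "x \<in> Phi 0 M" unfolding z(2)
      by (intro csubspace_sum) (auto simp: Phi_def csubspace_Sub)
  qed
next
  case (Suc k)
  have kn: "k < n" using Suc.prems by simp
  define N where "N = (derived ^^ (2^k - 1)) M"
  have pk: "(2::nat)^k \<ge> 1" by simp
  have e1: "2 ^ Suc k - 1 = (2^k - 1) + Suc (2^k - 1)" using pk by simp
  have e2: "(derived ^^ (2 ^ Suc k - 1)) M = (derived ^^ (2^k - 1)) (derived N)"
    unfolding e1 funpow_add N_def by (simp only: funpow.simps o_apply)
  have gN: "gsa N" unfolding N_def using gsa_funpow Suc.prems by blast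
  have gN': "gsa (derived N)" using gsa_derived[OF gN] .
  have NP: "N \<subseteq> Phi k M" unfolding N_def using Suc.IH[OF kn Suc.prems(2)] .
  have N'M: "derived N \<subseteq> M"
  proof -
    have "derived N = (derived ^^ (Suc (2^k - 1))) M" unfolding N_def by (simp only: funpow.simps o_apply)
    then show ?thesis using funpow_sub[OF Suc.prems(2)] by simp
  qed
  have IH2: "(derived ^^ (2^k - 1)) (derived N) \<subseteq> Phi k (derived N)" by (rule Suc.IH[OF kn gN'])
  have "Phi k (derived N) \<subseteq> Phi (Suc k) M"
    unfolding Phi_def[of k]
  proof (rule Sub_least)
    show "csubspace (Phi (Suc k) M)" unfolding Phi_def by (rule csubspace_Sub)
    show "\<forall>x\<in>Phi (Suc k) M. \<forall>y\<in>Phi (Suc k) M. lie_bracket x y \<in> Phi (Suc k) M"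
      unfolding Phi_def using Sub_closed by blast
    show "Yk k (derived N) \<subseteq> Phi (Suc k) M"
    proof
      fix x assume "x \<in> Yk k (derived N)"
      then obtain t where t: "t < n" "t = 0 \<or> k < t" "x \<in> derived N" "x \<in> Lk t" unfolding Yk_def by blast
      show "x \<in> Phi (Suc k) M"
      proof (cases "t = Suc k")
        case False
        then have "t = 0 \<or> Suc k < t" using t by auto
        then have "M \<inter> Lk t \<subseteq> Phi (Suc k) M" using Yk_Phi t(1) by blast
        moreover have "x \<in> M" using N'M t(3) by (rule subsetD)
        ultimately show ?thesis using t(4) by blast
      next
        case True
        have "x \<in> cspan (Hb N)" using t(3) derived_Hb[OF gN] by simp
        then have xs: "x \<in> cspan (Hb N \<inter> Lk t)" using span_comp[OF Hb_hom _ t(4) t(1)] by blast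
        have "Hb N \<inter> Lk t \<subseteq> Phi (Suc k) M"
        proof
          fix h assume "h \<in> Hb N \<inter> Lk t"
          then obtain a b i j where h: "h = lie_bracket a b" "i < n" "j < n" "a \<in> N" "a \<in> Lk i"
            "b \<in> N" "b \<in> Lk j" "h \<in> Lk t" unfolding Hb_def by blast
          have hij: "h \<in> Lk ((i + j) mod n)" using brk[OF h(2,3,5,7)] h(1) by simp
          show "h \<in> Phi (Suc k) M"
          proof (cases "(i + j) mod n = Suc k")
            case True
            have aP: "a \<in> Phi k M" using NP h(4) by (rule subsetD)
            have bP: "b \<in> Phi k M" using NP h(6) by (rule subsetD)
            have "lie_bracket a b \<in> Phi (Suc k) M"
              by (rule crux[OF Suc.prems(2) Suc.prems(1) h(2) aP h(5) h(3) bP h(7) True])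
            then show ?thesis using h(1) by simp
          next
            case False
            have "(i + j) mod n < n" using n1 by simp
            then have "h = 0" using zero_two[OF hij h(8) _ t(1)] False True by simp
            then show ?thesis unfolding Phi_def using csubspace_0[OF csubspace_Sub] by simp
          qed
        qed
        then have "cspan (Hb N \<inter> Lk t) \<subseteq> Phi (Suc k) M"
          by (rule cspan_least[OF csubspace_Sub[of "Yk (Suc k) M", folded Phi_def]])
        then show ?thesis using xs by blast
      qed
    qed
  qed
  then show ?case using e2 IH2 by simp
qed

lemma kreknin: assumes "gsa L" shows "(derived ^^ (2^(n-1))) L = {0}"
proof -
  have c: "(derived ^^ (2^(n-1) - 1)) L \<subseteq> Phi (n-1) L" using claim[OF _ assms] n1 by simp
  have "Yk (n-1) L \<subseteq> Scal"
  proof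
    fix x assume "x \<in> Yk (n-1) L"
    then obtain t where "t < n" "t = 0 \<or> n - 1 < t" "x \<in> Lk t" unfolding Yk_def by blast
    then have "x \<in> Lk 0" by (cases "t = 0") auto
    then obtain c where "x = mat c" using scal by blast
    then show "x \<in> Scal" unfolding Scal_def by simp
  qed
  then have "Phi (n-1) L \<subseteq> Scal" unfolding Phi_def
    by (rule Sub_least[OF csubspace_Scal Scal_closed])
  then have "(derived ^^ (2^(n-1) - 1)) L \<subseteq> Scal" using c by blast
  then have "derived ((derived ^^ (2^(n-1) - 1)) L) = {0}" by (rule derived_Scal)
  moreover have "(derived ^^ (2^(n-1))) L = derived ((derived ^^ (2^(n-1) - 1)) L)"
  proof -
    have "(2::nat)^(n-1) = Suc (2^(n-1) - 1)" by simp
    then obtain m where m: "(2::nat)^(n-1) = Suc m" by blast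
    then have m2: "(2::nat)^(n-1) - 1 = m" by simp
    show ?thesis unfolding m2 m by simp
  qed
  ultimately show ?thesis by simp
qed

end


type_synonym 'd cvec = "(complex, 'd) vec"

lemma mv_scale: "(A::'a::comm_ring_1^'n::finite^'m) *v (c *s x) = c *s (A *v x)"
  by (simp add: vec_eq_iff matrix_vector_mult_def sum_distrib_left algebra_simps)
lemma mv_add: "(A::'a::comm_ring_1^'n::finite^'m) *v (x + y) = A *v x + A *v y"
  by (simp add: matrix_vector_right_distrib)
lemma mv_diff: "(A::'a::comm_ring_1^'n::finite^'m) *v (x - y) = A *v x - A *v y"
  by (simp add: matrix_vector_mult_diff_distrib)
lemma mv_sum: "(A::'a::comm_ring_1^'n::finite^'m) *v (sum f I) = sum (\<lambda>i. A *v f i) I"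
  by (induction I rule: infinite_finite_induct) (auto simp: mv_add)
lemma mv_lb: "lie_bracket A B *v x = A *v (B *v x) - B *v (A *v x)"
  unfolding lie_bracket_def by (simp add: matrix_vector_mult_diff_rdistrib matrix_vector_mul_assoc)
lemma mv_mm: "(A ** B) *v x = A *v (B *v x)" by (simp add: matrix_vector_mul_assoc)
lemma mv_cscale: "cscale c A *v x = c *s (A *v x)"
  by (simp add: vec_eq_iff matrix_vector_mult_def cscale_def sum_distrib_left algebra_simps)

definition invar :: "'d::finite cmat \<Rightarrow> 'd cvec set \<Rightarrow> bool" where
  "invar A U \<longleftrightarrow> (\<forall>u\<in>U. A *v u \<in> U)"

lemma inv_span: assumes "\<And>x. x \<in> S \<Longrightarrow> A *v x \<in> vec.span S" shows "invar A (vec.span S)"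
  unfolding invar_def
proof
  fix u assume "u \<in> vec.span S" then show "A *v u \<in> vec.span S"
  proof (induction rule: vec.span_induct_alt)
    case base then show ?case by (simp add: vec.span_zero)
  next
    case (step c x y) then show ?case
      using assms by (simp add: mv_add mv_scale vec.span_add vec.span_scale)
  qed
qed

section \<open>Polynomials applied to operators\<close>

definition pev :: "complex poly \<Rightarrow> 'd::finite cmat \<Rightarrow> 'd cvec \<Rightarrow> 'd cvec" where
  "pev p A w = foldr (\<lambda>a v. a *s w + A *v v) (coeffs p) 0"

lemma pev_0[simp]: "pev 0 A w = 0" by (simp add: pev_def)

lemma pev_pCons: "pev (pCons a p) A w = a *s w + A *v pev p A w"
  by (cases "a = 0 \<and> p = 0") (auto simp: pev_def cCons_def)

lemma pev_add: "pev (p + q) A w = pev p A w + pev q A w"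
proof (induction p q rule: poly_induct2)
  case 0 then show ?case by simp
next
  case (pCons a p b q)
  then show ?case by (simp add: pev_pCons mv_add algebra_simps vector_sadd_rdistrib)
qed

lemma pev_smult: "pev (smult c p) A w = c *s pev p A w"
  by (induction p) (auto simp: pev_pCons mv_scale vector_sadd_rdistrib vector_add_ldistrib)

lemma pev_scale_w: "pev p A (c *s w) = c *s pev p A w"
  by (induction p) (auto simp: pev_pCons mv_scale vector_add_ldistrib mult.commute)

lemma pev_diff_w: "pev p A (x - y) = pev p A x - pev p A y"
proof (induction p)
  case 0 then show ?case by simp
next
  case (pCons a p)
  show ?case by (simp only: pev_pCons pCons.IH mv_diff vector_ssub_ldistrib) (simp add: algebra_simps)
qed

lemma pev_comm: "pev p A (A *v w) = A *v pev p A w"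
  by (induction p) (auto simp: pev_pCons mv_add mv_scale)

lemma pev_lin_factor: "pev ([:- r, 1:] * q) A w = pev q A (A *v w - r *s w)"
proof -
  have e: "[:- r, 1:] * q = smult (- r) q + pCons 0 q" by simp
  have "pev ([:- r, 1:] * q) A w = (- r) *s pev q A w + A *v pev q A w"
    unfolding e pev_add pev_smult pev_pCons by simp
  also have "\<dots> = pev q A (A *v w - r *s w)"
    by (simp add: pev_diff_w pev_comm pev_scale_w)
  finally show ?thesis .
qed

definition kry :: "'d::finite cmat \<Rightarrow> 'd cvec \<Rightarrow> nat \<Rightarrow> 'd cvec" where
  "kry A w j = (((*v) A) ^^ j) w"

lemma kry_0[simp]: "kry A w 0 = w" by (simp add: kry_def)
lemma kry_Suc: "kry A w (Suc j) = A *v kry A w j" by (simp add: kry_def)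

lemma pev_monom: "pev (monom 1 j) A w = kry A w j"
  by (induction j) (auto simp: monom_Suc pev_pCons kry_Suc monom_0)

lemma pev_sum: "pev (sum f I) A w = sum (\<lambda>i. pev (f i) A w) I"
  by (induction I rule: infinite_finite_induct) (auto simp: pev_add)

section \<open>Eigenvectors modulo a subspace\<close>

lemma eigen_from_poly:
  assumes U: "vec.subspace U" and W: "vec.subspace W" and UW: "U \<subseteq> W"
    and iW: "invar A W"
  shows "p \<noteq> 0 \<Longrightarrow> w \<in> W \<Longrightarrow> w \<notin> U \<Longrightarrow> pev p A w \<in> U \<Longrightarrow> \<exists>w'\<in>W. w' \<notin> U \<and> (\<exists>\<mu>. A *v w' - \<mu> *s w' \<in> U)"
proof (induction "degree p" arbitrary: p w rule: less_induct)
  case less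
  show ?case
  proof (cases "degree p = 0")
    case True
    then obtain c where pc: "p = [:c:]" by (metis degree_eq_zeroE)
    then have c: "c \<noteq> 0" using less.prems by simp
    have "pev p A w = c *s w" using pc by (simp add: pev_pCons)
    then have "c *s w \<in> U" using less.prems by simp
    then have "(1 / c) *s (c *s w) \<in> U" using U by (rule vec.subspace_scale[rotated])
    moreover have "(1 / c) *s (c *s w) = w" using c by simp
    ultimately have "w \<in> U" by simp
    then show ?thesis using less.prems by simp
  next
    case False
    then have "\<not> constant (poly p)" by (simp add: constant_degree)
    then obtain r where "poly p r = 0" using fundamental_theorem_of_algebra by blast
    then obtain q where pq: "p = [:- r, 1:] * q" using poly_eq_0_iff_dvd by (metis dvdE)
    then have q0: "q \<noteq> 0" using less.prems by auto
    have "degree p = degree [:- r, 1:] + degree q" unfolding pq by (rule degree_mult_eq) (use q0 in auto)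
    then have dq: "degree q < degree p" by simp
    have pe: "pev q A (A *v w - r *s w) \<in> U" using less.prems(4) unfolding pq pev_lin_factor .
    show ?thesis
    proof (cases "A *v w - r *s w \<in> U")
      case True then show ?thesis using less.prems by blast
    next
      case False
      have "A *v w - r *s w \<in> W" using iW less.prems W unfolding invar_def
        by (simp add: vec.subspace_diff vec.subspace_scale)
      then show ?thesis using less.hyps[OF dq q0 _ False pe] by blast
    qed
  qed
qed


lemma pev_diff: "pev (p - q) A w = pev p A w - pev q A w"
  using pev_add[of "p - q" q A w] by simp

definition Kr :: "'d::finite cmat \<Rightarrow> 'd cvec \<Rightarrow> 'd cvec set \<Rightarrow> nat \<Rightarrow> 'd cvec set" where
  "Kr A w U j = vec.span (U \<union> kry A w ` {..<j})"

lemma kry_terminates: fixes A :: "'d::finite cmat" shows "\<exists>m. kry A w m \<in> Kr A w U m"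
proof (rule ccontr)
  assume "\<not> (\<exists>m. kry A w m \<in> Kr A w U m)"
  then have nk: "\<And>j. kry A w j \<notin> Kr A w U j" by blast
  have "vec.independent (kry A w ` {..<N}) \<and> card (kry A w ` {..<N}) = N" for N
  proof (induction N)
    case 0 then show ?case by (simp add: vec.independent_empty)
  next
    case (Suc N)
    have sp: "vec.span (kry A w ` {..<N}) \<subseteq> Kr A w U N" unfolding Kr_def by (rule vec.span_mono) blast
    then have n1: "kry A w N \<notin> vec.span (kry A w ` {..<N})" using nk by blast
    have n2: "kry A w N \<notin> kry A w ` {..<N}"
    proof
      assume "kry A w N \<in> kry A w ` {..<N}"
      then have "kry A w N \<in> vec.span (kry A w ` {..<N})" by (rule vec.span_base)
      with n1 show False by simp
    qed
    have e: "kry A w ` {..<Suc N} = insert (kry A w N) (kry A w ` {..<N})" by (simp add: lessThan_Suc)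
    show ?case unfolding e using Suc n1 n2 by (simp add: vec.independent_insert card_insert_if)
  qed
  then have "vec.independent (kry A w ` {..<Suc CARD('d)})" "card (kry A w ` {..<Suc CARD('d)}) = Suc CARD('d)"
    by blast+
  moreover have "card (kry A w ` {..<Suc CARD('d)}) \<le> vec.dim (UNIV :: 'd cvec set)"
    by (rule vec.independent_card_le_dim[OF subset_UNIV calculation(1)])
  ultimately show False using vec_dim_card[where 'a=complex and 'n='d] by simp
qed

lemma span_Un_image:
  assumes U: "vec.subspace U" and x: "x \<in> vec.span (U \<union> f ` I)" and I: "finite I"
  shows "\<exists>u\<in>U. \<exists>c. x = u + (\<Sum>i\<in>I. c i *s f i)"
  using x
proof (induction rule: vec.span_induct_alt)
  case base
  show ?case by (rule bexI[of _ 0], rule exI[of _ "\<lambda>i. 0"]) (auto simp: vec.subspace_0[OF U])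
next
  case (step a x y)
  then obtain u c where u: "u \<in> U" "y = u + (\<Sum>i\<in>I. c i *s f i)" by blast
  from step(1) show ?case
  proof
    assume "x \<in> U"
    then show ?thesis using u U
      by (intro bexI[of _ "a *s x + u"] exI[of _ c]) (auto simp: vec.subspace_add vec.subspace_scale)
  next
    assume "x \<in> f ` I"
    then obtain j where j: "j \<in> I" "x = f j" by blast
    have "(\<Sum>i\<in>I. (c i + (if i = j then a else 0)) *s f i) = (\<Sum>i\<in>I. c i *s f i) + a *s f j"
      using I j by (simp add: vec.scale_left_distrib sum.distrib if_distrib[of "\<lambda>t. t *s _"] cong: if_cong)
    then show ?thesis using u j
      by (intro bexI[of _ u] exI[of _ "\<lambda>i. c i + (if i = j then a else 0)"]) (auto simp: algebra_simps)
  qed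
qed

lemma eigen_mod:
  assumes U: "vec.subspace U" and W: "vec.subspace W" and UW: "U \<subseteq> W" "U \<noteq> W"
    and iU: "invar A U" and iW: "invar A W"
  shows "\<exists>w\<in>W. w \<notin> U \<and> (\<exists>\<mu>. A *v w - \<mu> *s w \<in> U)"
proof -
  obtain w0 where w0: "w0 \<in> W" "w0 \<notin> U" using UW by blast
  obtain m where m: "kry A w0 m \<in> Kr A w0 U m" using kry_terminates by blast
  then obtain u c where uc: "u \<in> U" "kry A w0 m = u + (\<Sum>i\<in>{..<m}. c i *s kry A w0 i)"
    using span_Un_image[OF U, of "kry A w0 m" "kry A w0" "{..<m}"] unfolding Kr_def by blast
  define p where "p = monom 1 m - (\<Sum>i\<in>{..<m}. smult (c i) (monom 1 i))"
  have "pev p A w0 = kry A w0 m - (\<Sum>i\<in>{..<m}. c i *s kry A w0 i)"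
    unfolding p_def pev_diff pev_sum pev_smult pev_monom ..
  then have pe: "pev p A w0 \<in> U" using uc by simp
  have "coeff p m = 1" unfolding p_def by (simp add: coeff_sum)
  then have "p \<noteq> 0" by auto
  from eigen_from_poly[OF U W UW(1) iW this w0 pe] show ?thesis .
qed


definition trq :: "'d::finite cvec set \<Rightarrow> 'd cvec set \<Rightarrow> 'd cmat \<Rightarrow> complex" where
  "trq B BU T = (\<Sum>b\<in>B - BU. vec.representation B (T *v b) b)"

lemma rep_zero_out:
  assumes "vec.independent B" "x \<in> vec.span S" "S \<subseteq> B" "b \<notin> S"
  shows "vec.representation B x b = 0"
proof -
  have "vec.representation B x = vec.representation S x"
    by (rule vec.representation_extend[OF assms(1,2,3)])
  then show ?thesis using vec.representation_ne_zero[of S x b] assms(4) by auto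
qed

lemma inv_mm: "invar T X \<Longrightarrow> invar T' X \<Longrightarrow> invar (T ** T') X"
  unfolding invar_def by (simp add: mv_mm)

lemma rep_mv_expand:
  assumes B: "vec.independent B" "finite B" and iT: "invar T (vec.span B)" and x: "x \<in> vec.span B"
  shows "vec.representation B (T *v x) b = (\<Sum>b'\<in>B. vec.representation B x b' * vec.representation B (T *v b') b)"
proof -
  have "x = (\<Sum>b'\<in>B. vec.representation B x b' *s b')"
    using vec.sum_representation_eq[OF B(1) x B(2) order_refl] by simp
  then have "T *v x = (\<Sum>b'\<in>B. vec.representation B x b' *s (T *v b'))"
    by (metis (no_types, lifting) mv_scale mv_sum sum.cong)
  moreover have "\<And>b'. b' \<in> B \<Longrightarrow> T *v b' \<in> vec.span B"
    using iT vec.span_base unfolding invar_def by blast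
  ultimately show ?thesis
    by (simp add: vec.representation_sum[OF B(1)] vec.representation_scale[OF B(1)] vec.span_scale)
qed

lemma trq_mm:
  assumes B: "vec.independent B" "finite B" and BU: "BU \<subseteq> B"
    and iT: "invar T (vec.span B)" "invar T (vec.span BU)" and iT': "invar T' (vec.span B)"
  shows "trq B BU (T ** T') = (\<Sum>b\<in>B - BU. \<Sum>b'\<in>B - BU.
      vec.representation B (T' *v b) b' * vec.representation B (T *v b') b)"
proof -
  have "trq B BU (T ** T') = (\<Sum>b\<in>B - BU. \<Sum>b'\<in>B.
      vec.representation B (T' *v b) b' * vec.representation B (T *v b') b)"
    unfolding trq_def mv_mm
  proof (rule sum.cong[OF refl])
    fix b assume b: "b \<in> B - BU"
    have "T' *v b \<in> vec.span B" using iT' b vec.span_base unfolding invar_def by blast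
    then show "vec.representation B (T *v (T' *v b)) b = (\<Sum>b'\<in>B.
      vec.representation B (T' *v b) b' * vec.representation B (T *v b') b)"
      by (rule rep_mv_expand[OF B iT(1)])
  qed
  also have "\<dots> = (\<Sum>b\<in>B - BU. \<Sum>b'\<in>B - BU.
      vec.representation B (T' *v b) b' * vec.representation B (T *v b') b)"
  proof (rule sum.cong[OF refl])
    fix b assume b: "b \<in> B - BU"
    have z: "\<And>b'. b' \<in> BU \<Longrightarrow> vec.representation B (T *v b') b = 0"
    proof -
      fix b' assume "b' \<in> BU"
      then have "T *v b' \<in> vec.span BU" using iT(2) vec.span_base unfolding invar_def by blast
      then show "vec.representation B (T *v b') b = 0" using rep_zero_out[OF B(1) _ BU] b by blast
    qed
    have "B = (B - BU) \<union> BU" using BU by blast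
    then have "(\<Sum>b'\<in>B. vec.representation B (T' *v b) b' * vec.representation B (T *v b') b) =
       (\<Sum>b'\<in>B - BU. vec.representation B (T' *v b) b' * vec.representation B (T *v b') b) +
       (\<Sum>b'\<in>BU. vec.representation B (T' *v b) b' * vec.representation B (T *v b') b)"
      using B(2) BU by (metis (no_types, lifting) Diff_disjoint finite_Diff finite_subset sum.union_disjoint Int_commute)
    also have "(\<Sum>b'\<in>BU. vec.representation B (T' *v b) b' * vec.representation B (T *v b') b) = 0"
      using z by simp
    finally show "(\<Sum>b'\<in>B. vec.representation B (T' *v b) b' * vec.representation B (T *v b') b) =
       (\<Sum>b'\<in>B - BU. vec.representation B (T' *v b) b' * vec.representation B (T *v b') b)" by simp
  qed
  finally show ?thesis .
qed

lemma trq_comm: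
  assumes B: "vec.independent B" "finite B" and BU: "BU \<subseteq> B"
    and iT: "invar T (vec.span B)" "invar T (vec.span BU)" and iT': "invar T' (vec.span B)" "invar T' (vec.span BU)"
  shows "trq B BU (T ** T') = trq B BU (T' ** T)"
  unfolding trq_mm[OF B BU iT iT'(1)] trq_mm[OF B BU iT' iT(1)]
  by (subst sum.swap) (simp add: mult.commute)

lemma trq_diff:
  assumes B: "vec.independent B" and iT: "invar T (vec.span B)" and iT': "invar T' (vec.span B)"
    and BU: "BU \<subseteq> B"
  shows "trq B BU (T - T') = trq B BU T - trq B BU T'"
proof -
  have "\<And>b. b \<in> B - BU \<Longrightarrow> vec.representation B ((T - T') *v b) b =
      vec.representation B (T *v b) b - vec.representation B (T' *v b) b"
  proof -
    fix b assume "b \<in> B - BU"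
    then have "b \<in> vec.span B" using vec.span_base by blast
    then have "T *v b \<in> vec.span B" "T' *v b \<in> vec.span B" using iT iT' unfolding invar_def by blast+
    then show "vec.representation B ((T - T') *v b) b =
      vec.representation B (T *v b) b - vec.representation B (T' *v b) b"
      by (simp add: matrix_vector_mult_diff_rdistrib vec.representation_diff[OF B])
  qed
  then show ?thesis unfolding trq_def by (simp add: sum_subtractf)
qed

lemma trq_tri:
  assumes B: "vec.independent B" and iT: "invar T (vec.span B)"
    and tri: "\<And>b. b \<in> B - BU \<Longrightarrow> T *v b - l *s b \<in> vec.span (B - {b})"
  shows "trq B BU T = l * of_nat (card (B - BU))"
proof -
  have "\<And>b. b \<in> B - BU \<Longrightarrow> vec.representation B (T *v b) b = l"
  proof -
    fix b assume b: "b \<in> B - BU"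
    have sb: "b \<in> vec.span B" using b vec.span_base by blast
    have y: "T *v b - l *s b \<in> vec.span B" using tri[OF b] vec.span_mono[of "B - {b}" B] by blast
    have e: "T *v b = (T *v b - l *s b) + l *s b" by simp
    have "vec.representation B (T *v b) b = vec.representation B (T *v b - l *s b) b + vec.representation B (l *s b) b"
      by (subst e, subst vec.representation_add[OF B _ y]) (use sb vec.span_scale in auto)
    moreover have "vec.representation B (T *v b - l *s b) b = 0"
      by (rule rep_zero_out[OF B tri[OF b]]) auto
    moreover have "vec.representation B (l *s b) b = l"
      using b by (simp add: vec.representation_scale[OF B sb] vec.representation_basis[OF B])
    ultimately show "vec.representation B (T *v b) b = l" by simp
  qed
  then show ?thesis unfolding trq_def by (simp add: mult.commute)
qed

lemma inv_lb: "invar T X \<Longrightarrow> invar T' X \<Longrightarrow> vec.subspace X \<Longrightarrow> invar (lie_bracket T T') X"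
  unfolding invar_def by (simp add: mv_lb vec.subspace_diff)

lemma lambda_zero:
  assumes B: "vec.independent B" "finite B" and BU: "BU \<subseteq> B" "BU \<noteq> B"
    and iT: "invar T (vec.span B)" "invar T (vec.span BU)" and iT': "invar T' (vec.span B)" "invar T' (vec.span BU)"
    and tri: "\<And>b. b \<in> B - BU \<Longrightarrow> lie_bracket T T' *v b - l *s b \<in> vec.span (B - {b})"
  shows "l = 0"
proof -
  have "trq B BU (lie_bracket T T') = trq B BU (T ** T') - trq B BU (T' ** T)"
    unfolding lie_bracket_def using trq_diff[OF B(1) inv_mm[OF iT(1) iT'(1)] inv_mm[OF iT'(1) iT(1)] BU(1)] .
  also have "\<dots> = 0" using trq_comm[OF B BU(1) iT iT'] by simp
  finally have "trq B BU (lie_bracket T T') = 0" .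
  moreover have "trq B BU (lie_bracket T T') = l * of_nat (card (B - BU))"
    by (rule trq_tri[OF B(1) inv_lb[OF iT(1) iT'(1)] tri]) simp_all
  moreover have "card (B - BU) \<noteq> 0" using BU B(2) by auto
  ultimately show ?thesis by simp
qed

lemma basis_ext:
  assumes U: "vec.subspace U" and W: "vec.subspace W" and UW: "U \<subseteq> W"
  obtains BU B where "BU \<subseteq> B" "vec.independent B" "finite B" "vec.span BU = U" "vec.span B = W"
proof -
  obtain BU where BU: "BU \<subseteq> U" "vec.independent BU" "U \<subseteq> vec.span BU"
    using vec.maximal_independent_subset[of U] by blast
  obtain B where B: "BU \<subseteq> B" "B \<subseteq> W" "vec.independent B" "W \<subseteq> vec.span B"
    using vec.maximal_independent_subset_extend[of BU W] BU UW by blast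
  have "vec.span BU = U" using BU U by (metis vec.span_subspace)
  moreover have "vec.span B = W" using B W by (metis vec.span_subspace)
  moreover have "finite B" using B(3) vec.finiteI_independent by blast
  ultimately show ?thesis using that B by blast
qed


lemma mv_span: assumes "\<And>x. x \<in> S \<Longrightarrow> A *v x \<in> T" "vec.subspace T" "x \<in> vec.span S"
  shows "A *v x \<in> T"
  using assms(3)
proof (induction rule: vec.span_induct_alt)
  case base then show ?case using assms(2) by (simp add: vec.subspace_0)
next
  case (step c x y) then show ?case
    using assms by (simp add: mv_add mv_scale vec.subspace_add vec.subspace_scale)
qed

lemma span_Un_basis: assumes "vec.span BU = U" "BU \<subseteq> U"
  shows "vec.span (BU \<union> X) = vec.span (U \<union> X)"
proof
  show "vec.span (BU \<union> X) \<subseteq> vec.span (U \<union> X)" using assms by (intro vec.span_mono) blast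
  have "U \<subseteq> vec.span (BU \<union> X)" using assms(1) vec.span_mono[of BU "BU \<union> X"] by blast
  moreover have "X \<subseteq> vec.span (BU \<union> X)" using vec.span_superset[of "BU \<union> X"] by blast
  ultimately show "vec.span (U \<union> X) \<subseteq> vec.span (BU \<union> X)"
    by (intro vec.span_minimal) auto
qed

lemma invariance:
  assumes IS: "I \<subseteq> S" and Ibr: "\<And>A B. A \<in> S \<Longrightarrow> B \<in> I \<Longrightarrow> lie_bracket B A \<in> I"
    and U: "vec.subspace U" and W: "vec.subspace W" and UW: "U \<subseteq> W"
    and iS: "\<And>A. A \<in> S \<Longrightarrow> invar A U \<and> invar A W"
    and E: "E = {w\<in>W. \<forall>B\<in>I. B *v w - lam B *s w \<in> U}"
    and A: "A \<in> S" and w: "w \<in> E"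
  shows "A *v w \<in> E"
proof -
  have UE: "U \<subseteq> E"
  proof
    fix u assume u: "u \<in> U"
    have "\<forall>B\<in>I. B *v u - lam B *s u \<in> U"
      using iS IS u U unfolding invar_def by (auto intro!: vec.subspace_diff vec.subspace_scale)
    then show "u \<in> E" using E u UW by blast
  qed
  show ?thesis
  proof (cases "w \<in> U")
    case True then show ?thesis using iS[OF A] UE unfolding invar_def by blast
  next
    case wU: False
    have wW: "w \<in> W" using w E by blast
    define K where "K j = Kr A w U j" for j
    define m where "m = (LEAST j. kry A w j \<in> K j)"
    have mK: "kry A w m \<in> K m" unfolding m_def K_def using kry_terminates[of A w U] by (rule LeastI_ex)
    have nK: "\<And>j. j < m \<Longrightarrow> kry A w j \<notin> K j" unfolding m_def using not_less_Least by blast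
    have K0: "K 0 = U" unfolding K_def Kr_def using U by simp
    have m1: "m \<noteq> 0" using mK K0 wU by (metis kry_0)
    have Ksub: "\<And>j. vec.subspace (K j)" unfolding K_def Kr_def by simp
    have Kmono: "\<And>i j. i \<le> j \<Longrightarrow> K i \<subseteq> K j"
      unfolding K_def Kr_def by (intro vec.span_mono) auto
    have kryK: "\<And>i j. i < j \<Longrightarrow> kry A w i \<in> K j"
      unfolding K_def Kr_def by (intro vec.span_base) auto
    have UK: "\<And>j. U \<subseteq> K j" using K0 Kmono by blast
    have AK: "\<And>j x. x \<in> K j \<Longrightarrow> A *v x \<in> K (Suc j)"
    proof -
      fix j x assume x: "x \<in> K j"
      show "A *v x \<in> K (Suc j)"
      proof (rule mv_span[OF _ Ksub])
        show "x \<in> vec.span (U \<union> kry A w ` {..<j})" using x unfolding K_def Kr_def .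
        fix y assume "y \<in> U \<union> kry A w ` {..<j}"
        then show "A *v y \<in> K (Suc j)"
        proof
          assume "y \<in> U" then show ?thesis using iS[OF A] UK unfolding invar_def by blast
        next
          assume "y \<in> kry A w ` {..<j}"
          then obtain i where "i < j" "y = kry A w i" by blast
          then show ?thesis using kryK[of "Suc i" "Suc j"] by (simp add: kry_Suc)
        qed
      qed
    qed
    have iAK: "invar A (K m)" unfolding invar_def
    proof
      fix x assume x: "x \<in> K m"
      show "A *v x \<in> K m"
      proof (rule mv_span[OF _ Ksub])
        show "x \<in> vec.span (U \<union> kry A w ` {..<m})" using x unfolding K_def Kr_def .
        fix y assume "y \<in> U \<union> kry A w ` {..<m}"
        then show "A *v y \<in> K m"
        proof
          assume "y \<in> U" then show ?thesis using iS[OF A] UK unfolding invar_def by blast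
        next
          assume "y \<in> kry A w ` {..<m}"
          then obtain i where i: "i < m" "y = kry A w i" by blast
          show ?thesis
          proof (cases "Suc i = m")
            case True
            have "A *v y = kry A w (Suc i)" using i by (simp add: kry_Suc)
            then show ?thesis using mK True by simp
          next
            case False then show ?thesis using kryK[of "Suc i" m] i by (simp add: kry_Suc)
          qed
        qed
      qed
    qed
    have c1: "\<And>j. j < m \<Longrightarrow> \<forall>B\<in>I. B *v kry A w j - lam B *s kry A w j \<in> K j"
    proof -
      fix j show "j < m \<Longrightarrow> \<forall>B\<in>I. B *v kry A w j - lam B *s kry A w j \<in> K j"
      proof (induction j)
        case 0 then show ?case using w E K0 by simp
      next
        case (Suc j)
        show ?case
        proof
          fix B assume B: "B \<in> I"
          have BA: "lie_bracket B A \<in> I" by (rule Ibr[OF A B])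
          define y where "y = B *v kry A w j - lam B *s kry A w j"
          define y' where "y' = lie_bracket B A *v kry A w j - lam (lie_bracket B A) *s kry A w j"
          have y: "y \<in> K j" using Suc B unfolding y_def by simp
          have y': "y' \<in> K j" using Suc BA unfolding y'_def by simp
          have e: "B *v kry A w (Suc j) - lam B *s kry A w (Suc j) =
            A *v y + y' + lam (lie_bracket B A) *s kry A w j"
            unfolding y_def y'_def kry_Suc mv_lb by (simp add: mv_diff mv_scale algebra_simps)
          have "A *v y \<in> K (Suc j)" using AK[OF y] .
          moreover have "y' \<in> K (Suc j)" using y' Kmono[of j "Suc j"] by auto
          moreover have "lam (lie_bracket B A) *s kry A w j \<in> K (Suc j)"
            using kryK[of j "Suc j"] Ksub vec.subspace_scale by blast
          ultimately show "B *v kry A w (Suc j) - lam B *s kry A w (Suc j) \<in> K (Suc j)"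
            unfolding e using Ksub vec.subspace_add by blast
        qed
      qed
    qed
    have iBK: "\<And>B. B \<in> I \<Longrightarrow> invar B (K m)" unfolding invar_def
    proof
      fix B x assume B: "B \<in> I" and x: "x \<in> K m"
      show "B *v x \<in> K m"
      proof (rule mv_span[OF _ Ksub])
        show "x \<in> vec.span (U \<union> kry A w ` {..<m})" using x unfolding K_def Kr_def .
        fix y assume "y \<in> U \<union> kry A w ` {..<m}"
        then show "B *v y \<in> K m"
        proof
          assume "y \<in> U" then show ?thesis using iS IS B UK unfolding invar_def by blast
        next
          assume "y \<in> kry A w ` {..<m}"
          then obtain i where i: "i < m" "y = kry A w i" by blast
          have "B *v y - lam B *s y \<in> K m" using c1[OF i(1)] B i Kmono[of i m] by auto
          moreover have "lam B *s y \<in> K m" using kryK[OF i(1)] i Ksub vec.subspace_scale by blast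
          ultimately have "(B *v y - lam B *s y) + lam B *s y \<in> K m" using Ksub vec.subspace_add by blast
          then show ?thesis by simp
        qed
      qed
    qed
    obtain BU where BU: "BU \<subseteq> U" "vec.independent BU" "U \<subseteq> vec.span BU"
      using vec.maximal_independent_subset[of U] by blast
    have sBU: "vec.span BU = U" using BU U by (metis vec.span_subspace)
    have spK: "\<And>j. vec.span (BU \<union> kry A w ` {..<j}) = K j"
      unfolding K_def Kr_def using span_Un_basis[OF sBU BU(1)] .
    have indep: "\<And>j. j \<le> m \<Longrightarrow> vec.independent (BU \<union> kry A w ` {..<j})"
    proof -
      fix j show "j \<le> m \<Longrightarrow> vec.independent (BU \<union> kry A w ` {..<j})"
      proof (induction j)
        case 0 then show ?case using BU by simp
      next
        case (Suc j)
        have e: "BU \<union> kry A w ` {..<Suc j} = insert (kry A w j) (BU \<union> kry A w ` {..<j})"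
          by (auto simp: lessThan_Suc)
        have "kry A w j \<notin> vec.span (BU \<union> kry A w ` {..<j})" using spK nK Suc by simp
        then show ?case unfolding e using Suc by (intro vec.independent_insertI) auto
      qed
    qed
    define Bm where "Bm = BU \<union> kry A w ` {..<m}"
    have iBm: "vec.independent Bm" unfolding Bm_def using indep by simp
    have fBm: "finite Bm" using iBm vec.finiteI_independent by blast
    have spBm: "vec.span Bm = K m" unfolding Bm_def by (rule spK)
    have notin: "\<And>j. j < m \<Longrightarrow> kry A w j \<notin> BU \<union> kry A w ` {..<j}"
    proof
      fix j assume j: "j < m" and jin: "kry A w j \<in> BU \<union> kry A w ` {..<j}"
      from jin have "kry A w j \<in> vec.span (BU \<union> kry A w ` {..<j})" by (rule vec.span_base)
      then show False using spK nK j by simp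
    qed
    have BUBm: "BU \<subseteq> Bm" unfolding Bm_def by blast
    have BUne: "BU \<noteq> Bm"
    proof
      assume h: "BU = Bm"
      have "kry A w 0 \<in> kry A w ` {..<m}" using m1 by (intro imageI) simp
      then have "kry A w 0 \<in> Bm" unfolding Bm_def by blast
      then have "kry A w 0 \<in> BU" using h by simp
      then show False using notin[of 0] m1 by auto
    qed
    have lz: "\<And>B. B \<in> I \<Longrightarrow> lam (lie_bracket B A) = 0"
    proof -
      fix B assume B: "B \<in> I"
      have BA: "lie_bracket B A \<in> I" by (rule Ibr[OF A B])
      show "lam (lie_bracket B A) = 0"
      proof (rule lambda_zero[OF iBm fBm BUBm BUne])
        show "invar B (vec.span Bm)" using iBK[OF B] spBm by simp
        show "invar B (vec.span BU)" using iS IS B sBU by auto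
        show "invar A (vec.span Bm)" using iAK spBm by simp
        show "invar A (vec.span BU)" using iS[OF A] sBU by simp
        fix b assume b: "b \<in> Bm - BU"
        then obtain j where j: "j < m" "b = kry A w j" unfolding Bm_def by blast
        have "lie_bracket B A *v b - lam (lie_bracket B A) *s b \<in> K j" using c1[OF j(1)] BA j by blast
        moreover have "K j \<subseteq> vec.span (Bm - {b})"
        proof -
          have s1: "BU \<union> kry A w ` {..<j} \<subseteq> Bm" unfolding Bm_def using j by auto
          have s2: "b \<notin> BU \<union> kry A w ` {..<j}" using notin[OF j(1)] j(2) by simp
          have "BU \<union> kry A w ` {..<j} \<subseteq> Bm - {b}" using s1 s2 by blast
          then show ?thesis unfolding spK[symmetric] by (rule vec.span_mono)
        qed
        ultimately show "lie_bracket B A *v b - lam (lie_bracket B A) *s b \<in> vec.span (Bm - {b})" by blast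
      qed
    qed
    have AwW: "A *v w \<in> W" using iS[OF A] wW unfolding invar_def by blast
    have "\<forall>B\<in>I. B *v (A *v w) - lam B *s (A *v w) \<in> U"
    proof
      fix B assume B: "B \<in> I"
      have BA: "lie_bracket B A \<in> I" by (rule Ibr[OF A B])
      have e: "B *v (A *v w) - lam B *s (A *v w) =
          A *v (B *v w - lam B *s w) + (lie_bracket B A *v w - lam (lie_bracket B A) *s w)"
        using lz[OF B] by (simp add: mv_lb mv_diff mv_scale algebra_simps)
      have "B *v w - lam B *s w \<in> U" using w E B by blast
      then have "A *v (B *v w - lam B *s w) \<in> U" using iS[OF A] unfolding invar_def by blast
      moreover have "lie_bracket B A *v w - lam (lie_bracket B A) *s w \<in> U" using w E BA by blast
      ultimately show "B *v (A *v w) - lam B *s (A *v w) \<in> U" unfolding e using U vec.subspace_add by blast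
    qed
    then show ?thesis using AwW E by blast
  qed
qed


lemma eig_add: "vec.subspace U \<Longrightarrow> A *v x - m *s x \<in> U \<Longrightarrow> A *v y - m *s y \<in> U \<Longrightarrow> A *v (x + y) - m *s (x + y) \<in> U"
proof -
  assume U: "vec.subspace U" and x: "A *v x - m *s x \<in> U" and y: "A *v y - m *s y \<in> U"
  have e: "A *v (x + y) - m *s (x + y) = (A *v x - m *s x) + (A *v y - m *s y)"
    by (simp add: mv_add vec.scale_right_distrib algebra_simps)
  show ?thesis unfolding e by (rule vec.subspace_add[OF U x y])
qed

lemma eig_scale: "vec.subspace U \<Longrightarrow> A *v x - m *s x \<in> U \<Longrightarrow> A *v (c *s x) - m *s (c *s x) \<in> U"
proof -
  assume U: "vec.subspace U" and x: "A *v x - m *s x \<in> U"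
  have e: "A *v (c *s x) - m *s (c *s x) = c *s (A *v x - m *s x)"
    by (simp add: mv_scale vec.scale_right_diff_distrib mult.commute)
  show ?thesis unfolding e by (rule vec.subspace_scale[OF U x])
qed

lemma CE:
  "lie_algebra S \<Longrightarrow> (derived ^^ k) S = {0} \<Longrightarrow> vec.subspace U \<Longrightarrow> vec.subspace V \<Longrightarrow>
   U \<subseteq> V \<Longrightarrow> U \<noteq> V \<Longrightarrow> (\<forall>A\<in>S. invar A U \<and> invar A V) \<Longrightarrow>
   \<exists>v\<in>V. v \<notin> U \<and> (\<forall>A\<in>S. \<exists>c. A *v v - c *s v \<in> U)"
proof (induction k arbitrary: S V)
  case 0
  then have S0: "S = {0}" by simp
  obtain v where "v \<in> V" "v \<notin> U" using 0 by blast
  moreover have "\<forall>A\<in>S. \<exists>c. A *v v - c *s v \<in> U"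
    using S0 0(3) by (auto intro!: exI[of _ 0] simp: vec.subspace_0)
  ultimately show ?case by blast
next
  case (Suc k)
  note S = Suc.prems(1) and U = Suc.prems(3) and V = Suc.prems(4) and UV = Suc.prems(5,6)
    and iSV = Suc.prems(7)
  define cand where "cand W \<longleftrightarrow> vec.subspace W \<and> U \<subseteq> W \<and> U \<noteq> W \<and> W \<subseteq> V \<and> (\<forall>A\<in>S. invar A W)" for W
  have "cand V" unfolding cand_def using V UV iSV by blast
  then obtain W where W: "cand W" and Wmin: "\<And>W'. cand W' \<Longrightarrow> vec.dim W \<le> vec.dim W'"
    using ex_has_least_nat[of cand V vec.dim] by blast
  have Ws: "vec.subspace W" and UW: "U \<subseteq> W" "U \<noteq> W" and WV: "W \<subseteq> V" and iW: "\<And>A. A \<in> S \<Longrightarrow> invar A W"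
    using W unfolding cand_def by blast+
  have iU: "\<And>A. A \<in> S \<Longrightarrow> invar A U" using iSV by blast
  have minW: "\<And>E. vec.subspace E \<Longrightarrow> U \<subseteq> E \<Longrightarrow> U \<noteq> E \<Longrightarrow> E \<subseteq> W \<Longrightarrow> (\<forall>A\<in>S. invar A E) \<Longrightarrow> E = W"
  proof -
    fix E assume E: "vec.subspace E" "U \<subseteq> E" "U \<noteq> E" "E \<subseteq> W" "\<forall>A\<in>S. invar A E"
    then have "cand E" unfolding cand_def using WV by blast
    then have "vec.dim W \<le> vec.dim E" by (rule Wmin)
    then show "E = W" using vec.subspace_dim_equal[OF E(1) Ws E(4)] by simp
  qed
  define I where "I = derived S"
  have IS: "I \<subseteq> S" unfolding I_def by (rule lie_algebra_derived_sub[OF S])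
  have Il: "lie_algebra I" unfolding I_def by (rule lie_algebra_derived[OF S])
  have "(derived ^^ k) I = (derived ^^ Suc k) S" unfolding I_def by (simp only: funpow_Suc_right o_apply)
  then have Ik: "(derived ^^ k) I = {0}" using Suc.prems(2) by simp
  have Ibr: "\<And>A B. A \<in> S \<Longrightarrow> B \<in> I \<Longrightarrow> lie_bracket B A \<in> I"
  proof -
    fix A B assume "A \<in> S" "B \<in> I"
    then have "B \<in> S" using IS by blast
    then have "lie_bracket B A \<in> {lie_bracket A B | A B. A \<in> S \<and> B \<in> S}" using \<open>A \<in> S\<close> by blast
    then show "lie_bracket B A \<in> I" unfolding I_def derived_def using cspan_superset by (rule subsetD[rotated])
  qed
  have iI: "\<forall>A\<in>I. invar A U \<and> invar A W" using IS iU iW by blast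
  obtain v0 where v0: "v0 \<in> W" "v0 \<notin> U" and v0e: "\<forall>B\<in>I. \<exists>c. B *v v0 - c *s v0 \<in> U"
    using Suc.IH[OF Il Ik U Ws UW iI] by blast
  define lam where "lam B = (SOME c. B *v v0 - c *s v0 \<in> U)" for B
  have lam: "\<And>B. B \<in> I \<Longrightarrow> B *v v0 - lam B *s v0 \<in> U"
    unfolding lam_def using v0e by (meson someI_ex)
  define E where "E = {w\<in>W. \<forall>B\<in>I. B *v w - lam B *s w \<in> U}"
  have Es: "vec.subspace E"
    unfolding vec.subspace_def E_def
  proof (intro conjI ballI allI)
    show "0 \<in> {w \<in> W. \<forall>B\<in>I. B *v w - lam B *s w \<in> U}"
      using Ws U by (simp add: vec.subspace_0)
  next
    fix x y assume "x \<in> {w \<in> W. \<forall>B\<in>I. B *v w - lam B *s w \<in> U}" "y \<in> {w \<in> W. \<forall>B\<in>I. B *v w - lam B *s w \<in> U}"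
    then show "x + y \<in> {w \<in> W. \<forall>B\<in>I. B *v w - lam B *s w \<in> U}"
      using Ws eig_add[OF U] by (auto simp: vec.subspace_add)
  next
    fix c x assume "x \<in> {w \<in> W. \<forall>B\<in>I. B *v w - lam B *s w \<in> U}"
    then show "c *s x \<in> {w \<in> W. \<forall>B\<in>I. B *v w - lam B *s w \<in> U}"
      using Ws eig_scale[OF U] by (auto simp: vec.subspace_scale)
  qed
  have UE: "U \<subseteq> E"
  proof
    fix u assume u: "u \<in> U"
    have "\<forall>B\<in>I. B *v u - lam B *s u \<in> U"
      using iI u U unfolding invar_def by (auto intro!: vec.subspace_diff vec.subspace_scale)
    then show "u \<in> E" using E_def u UW by blast
  qed
  have v0E: "v0 \<in> E" unfolding E_def using v0 lam by blast
  have EW: "E \<subseteq> W" unfolding E_def by blast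
  have iE: "\<forall>A\<in>S. invar A E" unfolding invar_def
    using invariance[OF IS Ibr U Ws UW(1) _ E_def] iU iW by blast
  have EeqW: "E = W" using minW[OF Es UE _ EW iE] v0E v0(2) by blast
  have Wsc: "\<And>B w. B \<in> I \<Longrightarrow> w \<in> W \<Longrightarrow> B *v w - lam B *s w \<in> U"
    using EeqW unfolding E_def by blast
  obtain BU Bs where Bs: "BU \<subseteq> Bs" "vec.independent Bs" "finite Bs" "vec.span BU = U" "vec.span Bs = W"
    using basis_ext[OF U Ws UW(1)] by blast
  have BUne: "BU \<noteq> Bs" using Bs UW(2) by blast
  have lz: "\<And>A C. A \<in> S \<Longrightarrow> C \<in> S \<Longrightarrow> lam (lie_bracket A C) = 0"
  proof -
    fix A C assume A: "A \<in> S" and C: "C \<in> S"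
    have AC: "lie_bracket A C \<in> I"
    proof -
      have "lie_bracket A C \<in> {lie_bracket A B | A B. A \<in> S \<and> B \<in> S}" using A C by blast
      then show ?thesis unfolding I_def derived_def using cspan_superset by (rule subsetD[rotated])
    qed
    show "lam (lie_bracket A C) = 0"
    proof (rule lambda_zero[OF Bs(2) Bs(3) Bs(1) BUne])
      show "invar A (vec.span Bs)" "invar C (vec.span Bs)" using iW A C Bs(5) by auto
      show "invar A (vec.span BU)" "invar C (vec.span BU)" using iU A C Bs(4) by auto
      fix b assume b: "b \<in> Bs - BU"
      have "b \<in> W" using b Bs(5) vec.span_base by blast
      then have "lie_bracket A C *v b - lam (lie_bracket A C) *s b \<in> U" using Wsc AC by blast
      moreover have "U \<subseteq> vec.span (Bs - {b})"
        unfolding Bs(4)[symmetric] using b Bs(1) by (intro vec.span_mono) blast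
      ultimately show "lie_bracket A C *v b - lam (lie_bracket A C) *s b \<in> vec.span (Bs - {b})" by blast
    qed
  qed
  have "\<forall>A\<in>S. \<exists>c. A *v v0 - c *s v0 \<in> U"
  proof
    fix A assume A: "A \<in> S"
    obtain w1 \<mu> where w1: "w1 \<in> W" "w1 \<notin> U" "A *v w1 - \<mu> *s w1 \<in> U"
      using eigen_mod[OF U Ws UW iU[OF A] iW[OF A]] by blast
    define F where "F = {x\<in>W. A *v x - \<mu> *s x \<in> U}"
    have Fs: "vec.subspace F"
      unfolding vec.subspace_def F_def
    proof (intro conjI ballI allI)
      show "0 \<in> {x \<in> W. A *v x - \<mu> *s x \<in> U}" using Ws U by (simp add: vec.subspace_0)
    next
      fix x y assume "x \<in> {x \<in> W. A *v x - \<mu> *s x \<in> U}" "y \<in> {x \<in> W. A *v x - \<mu> *s x \<in> U}"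
      then show "x + y \<in> {x \<in> W. A *v x - \<mu> *s x \<in> U}"
        using Ws eig_add[OF U] by (auto simp: vec.subspace_add)
    next
      fix c x assume "x \<in> {x \<in> W. A *v x - \<mu> *s x \<in> U}"
      then show "c *s x \<in> {x \<in> W. A *v x - \<mu> *s x \<in> U}"
        using Ws eig_scale[OF U] by (auto simp: vec.subspace_scale)
    qed
    have UF: "U \<subseteq> F"
    proof
      fix u assume u: "u \<in> U"
      have "A *v u \<in> U" using iU[OF A] u unfolding invar_def by blast
      then have "A *v u - \<mu> *s u \<in> U" using u U by (simp add: vec.subspace_diff vec.subspace_scale)
      then show "u \<in> F" unfolding F_def using u UW by blast
    qed
    have "w1 \<in> F" unfolding F_def using w1 by blast
    then have UFne: "U \<noteq> F" using w1 by blast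
    have iF: "\<forall>C\<in>S. invar C F" unfolding invar_def
    proof (intro ballI)
      fix C x assume C: "C \<in> S" and x: "x \<in> F"
      have xW: "x \<in> W" and xe: "A *v x - \<mu> *s x \<in> U" using x unfolding F_def by blast+
      have CxW: "C *v x \<in> W" using iW[OF C] xW unfolding invar_def by blast
      have AC: "lie_bracket A C \<in> I"
      proof -
        have "lie_bracket A C \<in> {lie_bracket A B | A B. A \<in> S \<and> B \<in> S}" using A C by blast
        then show ?thesis unfolding I_def derived_def using cspan_superset by (rule subsetD[rotated])
      qed
      have "lie_bracket A C *v x - lam (lie_bracket A C) *s x \<in> U" using Wsc[OF AC xW] .
      then have t1: "lie_bracket A C *v x \<in> U" using lz[OF A C] by simp
      have t2: "C *v (A *v x - \<mu> *s x) \<in> U" using iU[OF C] xe unfolding invar_def by blast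
      have e: "A *v (C *v x) - \<mu> *s (C *v x) = C *v (A *v x - \<mu> *s x) + lie_bracket A C *v x"
        by (simp add: mv_lb mv_diff mv_scale algebra_simps)
      have "A *v (C *v x) - \<mu> *s (C *v x) \<in> U" unfolding e using U t1 t2 vec.subspace_add by blast
      then show "C *v x \<in> F" unfolding F_def using CxW by blast
    qed
    have "F \<subseteq> W" unfolding F_def by blast
    then have "F = W" using minW[OF Fs UF UFne _ iF] by blast
    then show "\<exists>c. A *v v0 - c *s v0 \<in> U" using v0(1) unfolding F_def by blast
  qed
  then show ?case using v0 WV by blast
qed


lemma flag:
  fixes S :: "'d::finite cmat set"
  assumes S: "lie_algebra S" and k: "(derived ^^ k) S = {0}"
  shows "N \<le> CARD('d) \<Longrightarrow> \<exists>vs. vec.independent (vs ` {..<N}) \<and> inj_on vs {..<N} \<and>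
           (\<forall>A\<in>S. \<forall>j<N. A *v vs j \<in> vec.span (vs ` {..j}))"
proof (induction N)
  case 0 then show ?case by (auto simp: vec.independent_empty)
next
  case (Suc N)
  then obtain vs where vs: "vec.independent (vs ` {..<N})" "inj_on vs {..<N}"
    "\<forall>A\<in>S. \<forall>j<N. A *v vs j \<in> vec.span (vs ` {..j})" by auto
  define U where "U = vec.span (vs ` {..<N})"
  have Us: "vec.subspace U" unfolding U_def by simp
  have iU: "\<forall>A\<in>S. invar A U"
  proof
    fix A assume A: "A \<in> S"
    show "invar A U" unfolding U_def
    proof (rule inv_span)
      fix x assume "x \<in> vs ` {..<N}"
      then obtain j where j: "j < N" "x = vs j" by blast
      have "vec.span (vs ` {..j}) \<subseteq> vec.span (vs ` {..<N})" using j by (intro vec.span_mono) auto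
      then show "A *v x \<in> vec.span (vs ` {..<N})" using vs(3) A j by blast
    qed
  qed
  have cardU: "card (vs ` {..<N}) = N" using vs(2) by (simp add: card_image)
  have "vec.dim U = N" unfolding U_def using vec.dim_span_eq_card_independent[OF vs(1)] cardU by simp
  moreover have "vec.dim (UNIV :: 'd cvec set) = CARD('d)" by (rule vec_dim_card)
  ultimately have UU: "U \<noteq> UNIV" using Suc.prems by auto
  have iUNIV: "\<forall>A\<in>S. invar A U \<and> invar A UNIV" using iU unfolding invar_def by auto
  obtain v where v: "v \<notin> U" "\<forall>A\<in>S. \<exists>c. A *v v - c *s v \<in> U"
    using CE[OF S k Us vec.subspace_UNIV subset_UNIV UU iUNIV] by blast
  define vs' where "vs' = vs(N := v)"
  have e1: "vs' ` {..<N} = vs ` {..<N}" unfolding vs'_def by auto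
  have e2: "vs' ` {..<Suc N} = insert v (vs ` {..<N})" unfolding vs'_def by (auto simp: lessThan_Suc)
  have vnot: "v \<notin> vs ` {..<N}"
  proof
    assume "v \<in> vs ` {..<N}"
    then have "v \<in> U" unfolding U_def by (rule vec.span_base)
    with v(1) show False by simp
  qed
  have ind: "vec.independent (vs' ` {..<Suc N})" unfolding e2
    by (rule vec.independent_insertI[OF v(1)[unfolded U_def] vs(1)])
  have inj: "inj_on vs' {..<Suc N}"
    using vs(2) vnot unfolding vs'_def by (auto simp: lessThan_Suc inj_on_def)
  have tri: "\<forall>A\<in>S. \<forall>j<Suc N. A *v vs' j \<in> vec.span (vs' ` {..j})"
  proof (intro ballI allI impI)
    fix A j assume A: "A \<in> S" and j: "j < Suc N"
    show "A *v vs' j \<in> vec.span (vs' ` {..j})"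
    proof (cases "j = N")
      case False
      then have jN: "j < N" using j by simp
      have "vs' ` {..j} = vs ` {..j}" using jN unfolding vs'_def by auto
      then show ?thesis using vs(3) A jN False unfolding vs'_def by simp
    next
      case True
      obtain c where c: "A *v v - c *s v \<in> U" using v(2) A by blast
      have sp: "vs' ` {..j} = vs' ` {..<Suc N}" using True by (simp add: lessThan_Suc_atMost)
      have "U \<subseteq> vec.span (vs' ` {..j})" unfolding sp e2 U_def by (intro vec.span_mono) auto
      then have 1: "A *v v - c *s v \<in> vec.span (vs' ` {..j})" using c by blast
      have "v \<in> vec.span (vs' ` {..j})" unfolding sp e2 by (intro vec.span_base) simp
      then have 2: "c *s v \<in> vec.span (vs' ` {..j})" by (rule vec.span_scale)
      have "A *v v = (A *v v - c *s v) + c *s v" by simp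
      then have "A *v v \<in> vec.span (vs' ` {..j})" using vec.span_add[OF 1 2] by simp
      then show ?thesis using True unfolding vs'_def by simp
    qed
  qed
  show ?case using ind inj tri by blast
qed

definition rk :: "'d::{finite,linorder} \<Rightarrow> nat" where "rk i = card {j. j < i}"

lemma rk_mono: "(i::'d::{finite,linorder}) < i' \<Longrightarrow> rk i < rk i'"
  unfolding rk_def by (rule psubset_card_mono) auto

lemma rk_inj: "inj (rk :: 'd::{finite,linorder} \<Rightarrow> nat)"
proof (rule injI)
  fix i j :: 'd assume e: "rk i = rk j"
  show "i = j"
  proof (rule linorder_cases[of i j])
    assume "i < j" then have "rk i < rk j" by (rule rk_mono) then show ?thesis using e by simp
  next
    assume "j < i" then have "rk j < rk i" by (rule rk_mono) then show ?thesis using e by simp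
  qed
qed

lemma rk_less: "rk (i::'d::{finite,linorder}) < CARD('d)"
  unfolding rk_def by (rule psubset_card_mono) auto

lemma rk_range: "range (rk :: 'd::{finite,linorder} \<Rightarrow> nat) = {..<CARD('d)}"
proof -
  have "range (rk :: 'd \<Rightarrow> nat) \<subseteq> {..<CARD('d)}" using rk_less by auto
  moreover have "card (range (rk :: 'd \<Rightarrow> nat)) = CARD('d)" using card_image[OF rk_inj] by simp
  ultimately show ?thesis by (simp add: card_subset_eq)
qed

lemma rk_le_iff: "rk (i::'d::{finite,linorder}) \<le> rk j \<longleftrightarrow> i \<le> j"
  by (metis leD le_less linorder_le_less_linear rk_mono)

lemma entry_axis: "(M::'a::comm_semiring_1^'n::finite^'m) $ i $ j = (M *v axis j 1) $ i"
  by (simp add: matrix_vector_mult_def axis_def if_distrib[of "\<lambda>x. _ * x"] sum.delta' cong: if_cong)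

lemma span_image_repr:
  assumes "x \<in> vec.span (f ` I)" "finite I"
  shows "\<exists>c. x = (\<Sum>i\<in>I. c i *s f i)"
proof -
  have "x \<in> vec.span ({0} \<union> f ` I)" using assms(1) vec.span_mono[of "f ` I" "{0} \<union> f ` I"] by blast
  then obtain u c where "u \<in> {0}" "x = u + (\<Sum>i\<in>I. c i *s f i)"
    using span_Un_image[OF vec.subspace_single_0, of x f I] assms(2) by blast
  then show ?thesis by auto
qed


lemma lie_triang:
  fixes S :: "'d::{finite,linorder} cmat set"
  assumes S: "lie_algebra S" and k: "(derived ^^ k) S = {0}"
  shows "triangularizable S"
proof -
  obtain vs where vs: "vec.independent (vs ` {..<CARD('d)})" "inj_on vs {..<CARD('d)}"
    "\<forall>A\<in>S. \<forall>j<CARD('d). A *v vs j \<in> vec.span (vs ` {..j})"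
    using flag[OF S k order_refl] by blast
  define P :: "'d cmat" where "P = (\<chi> a b. vs (rk b) $ a)"
  have colP: "\<And>b. P *v axis b 1 = vs (rk b)"
    unfolding P_def by (simp add: vec_eq_iff matrix_vector_mult_def axis_def if_distrib[of "\<lambda>x. _ * x"] sum.delta' cong: if_cong)
  define g :: "'d \<Rightarrow> 'd cvec" where "g = vs \<circ> rk"
  have "inj_on vs (range (rk :: 'd \<Rightarrow> nat))" using vs(2) rk_range[where 'd='d] by simp
  then have ginj: "inj g" unfolding g_def by (rule comp_inj_on[OF rk_inj])
  have "range g = vs ` range (rk :: 'd \<Rightarrow> nat)" unfolding g_def by (rule image_comp[symmetric])
  then have grange: "range g = vs ` {..<CARD('d)}" using rk_range[where 'd='d] by simp
  have Pmult: "\<And>x. P *v x = (\<Sum>b\<in>UNIV. x $ b *s g b)"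
    unfolding g_def P_def by (simp add: vec_eq_iff matrix_vector_mult_def sum_component mult.commute)
  have invP: "invertible P"
    unfolding invertible_left_inverse matrix_left_invertible_ker
  proof (intro allI impI)
    fix x :: "'d cvec" assume x0: "P *v x = 0"
    define c where "c v = x $ (inv g v)" for v
    have fin: "finite (vs ` {..<CARD('d)})" by simp
    have "(\<Sum>v\<in>range g. c v *s v) = (\<Sum>b\<in>UNIV. c (g b) *s g b)"
      by (rule sum.reindex[OF ginj, unfolded o_def])
    also have "\<dots> = (\<Sum>b\<in>UNIV. x $ b *s g b)" unfolding c_def using ginj by simp
    also have "\<dots> = 0" using x0 Pmult by simp
    finally have "(\<Sum>v\<in>vs ` {..<CARD('d)}. c v *s v) = 0" using grange by simp
    then have "\<forall>v\<in>vs ` {..<CARD('d)}. c v = 0" using vs(1) vec.independent_explicit by blast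
    then have "\<And>b. x $ b = 0"
    proof -
      fix b
      have "g b \<in> vs ` {..<CARD('d)}" using grange by blast
      then have "c (g b) = 0" using \<open>\<forall>v\<in>vs ` {..<CARD('d)}. c v = 0\<close> by blast
      then show "x $ b = 0" unfolding c_def using inv_f_f[OF ginj] by simp
    qed
    then show "x = 0" by (simp add: vec_eq_iff)
  qed
  define Pi where "Pi = matrix_inv P"
  have PiP: "Pi ** P = mat 1"
    using someI_ex[OF invP[unfolded invertible_def]] unfolding Pi_def matrix_inv_def by blast
  define ri :: "nat \<Rightarrow> 'd" where "ri k = inv rk k" for k
  have rri: "\<And>k. k < CARD('d) \<Longrightarrow> rk (ri k :: 'd) = k"
    unfolding ri_def using f_inv_into_f[of _ "rk :: 'd \<Rightarrow> nat" UNIV] rk_range[where 'd='d] by simp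
  have Pivs: "\<And>k. k < CARD('d) \<Longrightarrow> Pi *v vs k = axis (ri k :: 'd) 1"
  proof -
    fix k assume k: "k < CARD('d)"
    have "vs k = P *v axis (ri k :: 'd) 1" using colP rri[OF k] by simp
    then show "Pi *v vs k = axis (ri k :: 'd) 1" by (simp add: mv_mm[symmetric] PiP)
  qed
  have "\<forall>A\<in>S. upper_triangular (Pi ** A ** P)"
    unfolding upper_triangular_def
  proof (intro ballI allI impI)
    fix A i j assume A: "A \<in> S" and ji: "(j::'d) < i"
    have rj: "rk j < CARD('d)" by (rule rk_less)
    have "A *v vs (rk j) \<in> vec.span (vs ` {..rk j})" using vs(3) A rj by blast
    then obtain c where c: "A *v vs (rk j) = (\<Sum>k\<in>{..rk j}. c k *s vs k)"
      using span_image_repr[of _ vs "{..rk j}"] by blast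
    have "(Pi ** A ** P) $ i $ j = (Pi *v (A *v (P *v axis j 1))) $ i"
      by (simp add: entry_axis mv_mm)
    also have "\<dots> = (Pi *v (\<Sum>k\<in>{..rk j}. c k *s vs k)) $ i" using colP c by simp
    also have "\<dots> = (\<Sum>k\<in>{..rk j}. c k *s axis (ri k) 1) $ i"
      using Pivs rj by (simp add: mv_sum mv_scale)
    also have "\<dots> = (\<Sum>k\<in>{..rk j}. c k * (axis (ri k :: 'd) 1 :: 'd cvec) $ i)"
      by (simp add: sum_component)
    also have "\<dots> = 0"
    proof (rule sum.neutral, intro ballI)
      fix k assume "k \<in> {..rk j}"
      then have kj: "k \<le> rk j" by simp
      then have kd: "k < CARD('d)" using rj by simp
      have "ri k \<noteq> i"
      proof
        assume "ri k = i" then have "rk i = k" using rri[OF kd] by simp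
        then have "rk i \<le> rk j" using kj by simp
        then have "i \<le> j" by (simp add: rk_le_iff)
        then show False using ji by simp
      qed
      then show "c k * (axis (ri k :: 'd) 1 :: 'd cvec) $ i = 0" by (simp add: axis_def)
    qed
    finally show "(Pi ** A ** P) $ i $ j = 0" .
  qed
  then show ?thesis unfolding triangularizable_def Pi_def using invP by blast
qed


theorem mainTheorem15:
  fixes L :: "('d::{finite,linorder}) cmat set"
    and Lk :: "nat \<Rightarrow> 'd cmat set"
    and n :: nat
  assumes "n \<ge> 1"
    and "lie_algebra L"
    and "Zn_graded n Lk L"
    and "\<forall>A\<in>Lk 0. \<exists>c. A = mat c"
  shows "solvable L \<and> triangularizable L"
proof -
  note G = assms(3)[unfolded Zn_graded_def]
  have Lsum: "L = {(\<Sum>k<n. x k) | x. \<forall>k<n. x k \<in> Lk k}" using G by blast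
  interpret grad n Lk
  proof
    show "n \<ge> 1" by (rule assms(1))
    show "\<And>k. k < n \<Longrightarrow> csubspace (Lk k)" using G by blast
    show "\<And>x k. \<forall>k<n. x k \<in> Lk k \<Longrightarrow> (\<Sum>k<n. x k) = 0 \<Longrightarrow> k < n \<Longrightarrow> x k = 0" using G by blast
    show "\<And>j k A B. j < n \<Longrightarrow> k < n \<Longrightarrow> A \<in> Lk j \<Longrightarrow> B \<in> Lk k \<Longrightarrow> lie_bracket A B \<in> Lk ((j + k) mod n)"
      using G by blast
    show "\<And>A. A \<in> Lk 0 \<Longrightarrow> \<exists>c. A = mat c" using assms(4) by blast
  qed
  have LkL: "\<And>t. t < n \<Longrightarrow> Lk t \<subseteq> L"
  proof
    fix t y assume t: "t < n" and y: "y \<in> Lk t"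
    define z where "z k = (if k = t then y else 0)" for k
    have "\<forall>k<n. z k \<in> Lk k" using y sub csubspace_0 unfolding z_def by auto
    moreover have "(\<Sum>k<n. z k) = y" unfolding z_def using t by simp
    ultimately show "y \<in> L" using Lsum by blast
  qed
  have gL: "gsa L" unfolding gsa_def
  proof (intro conjI ballI)
    show "csubspace L" using assms(2) unfolding lie_algebra_def by blast
    show "\<And>x y. x \<in> L \<Longrightarrow> y \<in> L \<Longrightarrow> lie_bracket x y \<in> L" using assms(2) unfolding lie_algebra_def by blast
    fix x assume "x \<in> L"
    then obtain z where z: "x = (\<Sum>k<n. z k)" "\<forall>k<n. z k \<in> Lk k" using Lsum by blast
    then have "\<forall>t<n. z t \<in> L \<inter> Lk t" using LkL by blast
    then show "\<exists>z. (\<forall>t<n. z t \<in> L \<inter> Lk t) \<and> x = (\<Sum>t<n. z t)" using z(1) by blast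
  qed
  have d: "(derived ^^ (2^(n-1))) L = {0}" by (rule kreknin[OF gL])
  then have "solvable L" unfolding solvable_def by blast
  moreover have "triangularizable L" by (rule lie_triang[OF assms(2) d])
  ultimately show ?thesis by blast
qed


end
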